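(* Consider the problem $\min_{x\in\mathbb{R}^n}\max_{y\in\Delta}F(x)^Ty$ with Assumption A, the strict complementarity assumption, and either the bounded level set assumption or boundedness of $\{z^t\}$. Let Smoothed-GDA be run with parameters $$p>3L,\ c<\frac{1}{p+L},\ \alpha<\min\Big\{\frac{1}{11L},\frac{c^2(p-L)^2}{4L(1+c(p-L))^2}\Big\},\ \beta\le\min\Big\{\frac1{36},\frac{(p-L)^2}{384p(p+L)^2}\Big\}.$$ Then there is a constant $\beta'>0$ such that, if in addition $\beta<\beta'$, for every $t\ge0$ $$\phi^t-\phi^{t+1}\ge\frac1{16c}\|x^t-x^{t+1}\|^2+\frac1{16\alpha}\|y^t-y^t_+(z^t)\|^2+\frac{p}{16\beta}\|z^t-z^{t+1}\|^2.$$
   Context: $F(x)=(f_1(x),\dots,f_m(x))^T$ is a smooth map $\mathbb{R}^n\to\mathbb{R}^m$, $\Delta$ the probability simplex in $\mathbb{R}^m$, $f(x,y)=F(x)^Ty$. Assumption A: $\nabla_xf,\nabla_yf$ are $L$-Lipschitz ($L>0$), $\psi(x)=\max_if_i(x)$ is bounded below by a finite constant. KKT system for $(x^*,y^* )$ with multipliers $\mu\in\mathbb{R},\nu\in\mathbb{R}^m$: $\sum_iy^*_i\nabla f_i(x^* )=0$, $\sum_iy_i^*=1$, $y_i^*\ge0$, $\mu-\nu_i=f_i(x^* )$, $\nu_i\ge0$, $\nu_iy_i^*=0$. Strict complementarity: every solution of the KKT system has $\nu_i>0$ whenever $y^*_i=0$. Bounded level set assumption: $\{x:\psi(x)\le R\}$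 bounded for all $R>0$. $K(x,z;y)=f(x,y)+\frac p2\|x-z\|^2$; $x(y,z)=\arg\min_xK(x,z;y)$; $d(y,z)=\min_xK(x,z;y)$; $P(z)=\min_x\max_{y\in\Delta}K(x,z;y)$; $\phi(x,y,z)=K(x,z;y)-2d(y,z)+2P(z)$. Smoothed-GDA: $x^{t+1}=x^t-c\nabla_xK(x^t,z^t;y^t)$, $y^{t+1}=P_\Delta(y^t+\alpha\nabla_yK(x^{t+1},z^t;y^t))$, $z^{t+1}=z^t+\beta(x^{t+1}-z^t)$; $\phi^t=\phi(x^t,y^t,z^t)$, $y^t_+(z^t)=P_\Delta(y^t+\alpha\nabla_yK(x(y^t,z^t),z^t;y^t))$. *)

theory Defs
  imports "HOL-Analysis.Analysis"
begin

text \<open>Problem data: F : R^n -> R^m (F x $ i = f_i x), gF i x = gradient of f_i at x.\<close>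

definition prob_simplex :: "(real^'m) set" where
  "prob_simplex = {y. (\<forall>i. 0 \<le> y $ i) \<and> (\<Sum>i\<in>UNIV. y $ i) = 1}"

definition proj_simplex :: "real^'m \<Rightarrow> real^'m" where
  "proj_simplex v = closest_point prob_simplex v"

definition fval :: "(real^'n \<Rightarrow> real^'m) \<Rightarrow> real^'n \<Rightarrow> real^'m \<Rightarrow> real" where
  "fval F x y = F x \<bullet> y"

definition gradx_f :: "('m \<Rightarrow> real^'n \<Rightarrow> real^'n) \<Rightarrow> real^'n \<Rightarrow> real^'m \<Rightarrow> real^'n" where
  "gradx_f gF x y = (\<Sum>i\<in>UNIV. y $ i *\<^sub>R gF i x)"

definition psi :: "(real^'n \<Rightarrow> real^'m) \<Rightarrow> real^'n \<Rightarrow> real" where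
  "psi F x = Max (range (\<lambda>i. F x $ i))"

definition KKT :: "(real^'n \<Rightarrow> real^'m) \<Rightarrow> ('m \<Rightarrow> real^'n \<Rightarrow> real^'n)
    \<Rightarrow> real^'n \<Rightarrow> real^'m \<Rightarrow> real \<Rightarrow> real^'m \<Rightarrow> bool" where
  "KKT F gF x y \<mu> \<nu> \<longleftrightarrow>
     (\<Sum>i\<in>UNIV. y $ i *\<^sub>R gF i x) = 0 \<and> (\<Sum>i\<in>UNIV. y $ i) = 1 \<and>
     (\<forall>i. 0 \<le> y $ i) \<and> (\<forall>i. \<mu> - \<nu> $ i = F x $ i) \<and>
     (\<forall>i. 0 \<le> \<nu> $ i) \<and> (\<forall>i. \<nu> $ i * y $ i = 0)"

definition strict_complementarity :: "(real^'n \<Rightarrow> real^'m) \<Rightarrow> ('m \<Rightarrow> real^'n \<Rightarrow> real^'n) \<Rightarrow> bool" where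
  "strict_complementarity F gF \<longleftrightarrow>
     (\<forall>x y \<mu> \<nu>. KKT F gF x y \<mu> \<nu> \<longrightarrow> (\<forall>i. y $ i = 0 \<longrightarrow> \<nu> $ i > 0))"

definition bounded_level_sets :: "(real^'n \<Rightarrow> real^'m) \<Rightarrow> bool" where
  "bounded_level_sets F \<longleftrightarrow> (\<forall>R>0. bounded {x. psi F x \<le> R})"

definition Kfun :: "(real^'n \<Rightarrow> real^'m) \<Rightarrow> real \<Rightarrow> real^'n \<Rightarrow> real^'n \<Rightarrow> real^'m \<Rightarrow> real" where
  "Kfun F p x z y = fval F x y + p / 2 * (norm (x - z))\<^sup>2"

definition xopt :: "(real^'n \<Rightarrow> real^'m) \<Rightarrow> real \<Rightarrow> real^'m \<Rightarrow> real^'n \<Rightarrow> real^'n" where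
  "xopt F p y z = (SOME x. \<forall>x'. Kfun F p x z y \<le> Kfun F p x' z y)"

definition dfun :: "(real^'n \<Rightarrow> real^'m) \<Rightarrow> real \<Rightarrow> real^'m \<Rightarrow> real^'n \<Rightarrow> real" where
  "dfun F p y z = (INF x. Kfun F p x z y)"

definition Pfun :: "(real^'n \<Rightarrow> real^'m) \<Rightarrow> real \<Rightarrow> real^'n \<Rightarrow> real" where
  "Pfun F p z = (INF x. SUP y\<in>prob_simplex. Kfun F p x z y)"

definition phi :: "(real^'n \<Rightarrow> real^'m) \<Rightarrow> real \<Rightarrow> real^'n \<Rightarrow> real^'m \<Rightarrow> real^'n \<Rightarrow> real" where
  "phi F p x y z = Kfun F p x z y - 2 * dfun F p y z + 2 * Pfun F p z"

definition gradx_K :: "('m \<Rightarrow> real^'n \<Rightarrow> real^'n) \<Rightarrow> real \<Rightarrow> real^'n \<Rightarrow> real^'n \<Rightarrow> real^'m \<Rightarrow> real^'n" where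
  "gradx_K gF p x z y = gradx_f gF x y + p *\<^sub>R (x - z)"

definition smoothed_gda :: "(real^'n \<Rightarrow> real^'m) \<Rightarrow> ('m \<Rightarrow> real^'n \<Rightarrow> real^'n)
   \<Rightarrow> real \<Rightarrow> real \<Rightarrow> real \<Rightarrow> real
   \<Rightarrow> (nat \<Rightarrow> real^'n) \<Rightarrow> (nat \<Rightarrow> real^'m) \<Rightarrow> (nat \<Rightarrow> real^'n) \<Rightarrow> bool" where
  "smoothed_gda F gF p c \<alpha> \<beta> xs ys zs \<longleftrightarrow>
     (\<forall>t. xs (Suc t) = xs t - c *\<^sub>R gradx_K gF p (xs t) (zs t) (ys t) \<and>
          ys (Suc t) = proj_simplex (ys t + \<alpha> *\<^sub>R F (xs (Suc t))) \<and>
          zs (Suc t) = zs t + \<beta> *\<^sub>R (xs (Suc t) - zs t))"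

end

theory Submission
  imports Defs
begin

lemma simplex_mem: "y \<in> prob_simplex \<longleftrightarrow> (\<forall>i. 0 \<le> y $ i) \<and> (\<Sum>i\<in>UNIV. y $ i) = 1"
  by (simp add: prob_simplex_def)

lemma axis_simplex: "axis i 1 \<in> (prob_simplex :: (real^'m) set)"
proof -
  have "(\<Sum>j\<in>UNIV. axis i (1::real) $ j) = 1"
    by (simp add: axis_def sum.delta)
  then show ?thesis by (auto simp: simplex_mem axis_def)
qed

lemma sum_delta_aux: "(\<Sum>k\<in>UNIV. (t::real) * ((if k = (j::'m::finite) then 1 else 0) - (if k = i then 1 else 0))) = 0"
proof -
  have "(\<Sum>k\<in>UNIV. (t::real) * ((if k = j then 1 else 0) - (if k = i then 1 else 0)))
     = (\<Sum>k\<in>UNIV. (if k = j then t else 0)) - (\<Sum>k\<in>UNIV. (if k = i then t else 0))"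
    unfolding sum_subtractf[symmetric] by (intro sum.cong) auto
  then show ?thesis by (simp add: sum.delta)
qed

lemma simplex_nonempty: "(prob_simplex :: (real^'m) set) \<noteq> {}"
  using axis_simplex by blast

lemma simplex_closed: "closed (prob_simplex :: (real^'m) set)"
proof -
  have "prob_simplex = (\<Inter>i. {y::real^'m. 0 \<le> y $ i}) \<inter> {y. (\<Sum>i\<in>UNIV. y $ i) = 1}"
    by (auto simp: simplex_mem)
  moreover have "closed {y::real^'m. (\<Sum>i\<in>UNIV. y $ i) = 1}"
    by (intro closed_Collect_eq continuous_intros)
  moreover have "closed (\<Inter>i. {y::real^'m. 0 \<le> y $ i})"
    by (intro closed_INT ballI closed_Collect_le continuous_intros)
  ultimately show ?thesis by (metis closed_Int)
qed

lemma simplex_convex: "convex (prob_simplex :: (real^'m) set)"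
proof (rule convexI)
  fix x y :: "real^'m" and u v :: real
  assume x: "x \<in> prob_simplex" and y: "y \<in> prob_simplex" and "0 \<le> u" "0 \<le> v" "u + v = 1"
  then have uv: "0 \<le> u \<and> 0 \<le> v \<and> u + v = 1" by simp
  have "\<forall>i. 0 \<le> (u *\<^sub>R x + v *\<^sub>R y) $ i"
    using x y uv by (auto simp: simplex_mem intro!: add_nonneg_nonneg mult_nonneg_nonneg)
  moreover have "(\<Sum>i\<in>UNIV. (u *\<^sub>R x + v *\<^sub>R y) $ i) = 1"
    using x y uv by (simp add: simplex_mem sum.distrib sum_distrib_left[symmetric])
  ultimately show "u *\<^sub>R x + v *\<^sub>R y \<in> prob_simplex" by (simp add: simplex_mem)
qed

lemma simplex_comp_le1: "y \<in> prob_simplex \<Longrightarrow> y $ i \<le> (1::real)"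
proof -
  assume y: "y \<in> prob_simplex"
  have "y $ i \<le> (\<Sum>j\<in>UNIV. y $ j)"
    using y by (intro member_le_sum) (auto simp: simplex_mem)
  then show ?thesis using y by (simp add: simplex_mem)
qed

lemma simplex_norm: "y \<in> prob_simplex \<Longrightarrow> norm (y::real^'m) \<le> 1"
proof -
  assume y: "y \<in> prob_simplex"
  have "norm y \<le> (\<Sum>i\<in>UNIV. \<bar>y $ i\<bar>)" by (rule norm_le_l1_cart)
  also have "\<dots> = (\<Sum>i\<in>UNIV. y $ i)" using y by (simp add: simplex_mem)
  finally show ?thesis using y by (simp add: simplex_mem)
qed

lemma simplex_dist: "y \<in> prob_simplex \<Longrightarrow> y' \<in> prob_simplex \<Longrightarrow> norm (y - (y'::real^'m)) \<le> 2"
  using simplex_norm[of y] simplex_norm[of y'] norm_triangle_ineq4[of y y'] by linarith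

lemma simplex_bounded: "bounded (prob_simplex :: (real^'m) set)"
  unfolding bounded_iff using simplex_norm by blast

lemma simplex_compact: "compact (prob_simplex :: (real^'m) set)"
  using simplex_bounded simplex_closed by (simp add: compact_eq_bounded_closed)

lemma proj_in: "proj_simplex v \<in> prob_simplex"
  unfolding proj_simplex_def by (rule closest_point_in_set[OF simplex_closed simplex_nonempty])

lemma proj_vi: "w \<in> prob_simplex \<Longrightarrow> inner (v - proj_simplex v) (w - proj_simplex v) \<le> 0"
  unfolding proj_simplex_def by (rule closest_point_dot[OF simplex_convex simplex_closed])

lemma proj_lip: "norm (proj_simplex v - proj_simplex w) \<le> norm (v - w)"
  using closest_point_lipschitz[OF simplex_convex simplex_closed simplex_nonempty, of v w]
  by (simp add: proj_simplex_def dist_norm)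

lemma simplex_inner_le: "y \<in> prob_simplex \<Longrightarrow> inner (g::real^'m) y \<le> Max (range (\<lambda>i. g $ i))"
proof -
  assume y: "y \<in> prob_simplex"
  have "inner g y = (\<Sum>i\<in>UNIV. g $ i * y $ i)" by (simp add: inner_vec_def)
  also have "\<dots> \<le> (\<Sum>i\<in>UNIV. Max (range (\<lambda>i. g $ i)) * y $ i)"
    using y by (intro sum_mono mult_right_mono) (auto simp: simplex_mem)
  also have "\<dots> = Max (range (\<lambda>i. g $ i))" using y by (simp add: simplex_mem sum_distrib_left[symmetric])
  finally show ?thesis .
qed

lemma Max_attained: "\<exists>i. Max (range (\<lambda>i. (g::real^'m) $ i)) = g $ i"
proof -
  have "Max (range (\<lambda>i. g $ i)) \<in> range (\<lambda>i. g $ i)" by (intro Max_in) auto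
  then show ?thesis by blast
qed

lemma Max_ge: "g $ i \<le> Max (range (\<lambda>i. (g::real^'m) $ i))"
  by (intro Max_ge) auto

lemma proj_support:
  assumes "proj_simplex v $ i > 0"
  shows "(v - proj_simplex v) $ j \<le> (v - proj_simplex v) $ i"
proof (cases "j = i")
  case True then show ?thesis by simp
next
  case False
  let ?q = "proj_simplex v"
  let ?t = "?q $ i"
  let ?w = "?q + ?t *\<^sub>R (axis j 1 - axis i 1)"
  have q: "?q \<in> prob_simplex" by (rule proj_in)
  have "?w \<in> prob_simplex"
  proof -
    have "\<forall>k. 0 \<le> ?w $ k"
    proof
      fix k
      show "0 \<le> ?w $ k" using q assms False by (auto simp: simplex_mem axis_def)
    qed
    moreover have "(\<Sum>k\<in>UNIV. ?w $ k) = 1"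
      using q False by (simp add: simplex_mem sum.distrib axis_def sum_delta_aux)
    ultimately show ?thesis by (simp add: simplex_mem)
  qed
  from proj_vi[OF this, of v]
  have "?t * inner (v - ?q) (axis j 1 - axis i 1) \<le> 0" by simp
  then have "inner (v - ?q) (axis j 1 - axis i 1) \<le> 0"
    using assms by (simp add: mult_le_0_iff)
  then show ?thesis by (simp add: inner_diff_right inner_axis)
qed

lemma vi_support:
  assumes y: "y \<in> prob_simplex" and vi: "\<forall>w\<in>prob_simplex. inner g (w - y) \<le> 0"
    and pos: "y $ i > 0"
  shows "(g::real^'m) $ j \<le> g $ i"
proof (cases "j = i")
  case True then show ?thesis by simp
next
  case False
  let ?t = "y $ i"
  let ?w = "y + ?t *\<^sub>R (axis j 1 - axis i 1)"
  have "?w \<in> prob_simplex"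
  proof -
    have "\<forall>k. 0 \<le> ?w $ k"
    proof
      fix k
      show "0 \<le> ?w $ k" using y pos False by (auto simp: simplex_mem axis_def)
    qed
    moreover have "(\<Sum>k\<in>UNIV. ?w $ k) = 1"
      using y False by (simp add: simplex_mem sum.distrib axis_def sum_delta_aux)
    ultimately show ?thesis by (simp add: simplex_mem)
  qed
  from vi[rule_format, OF this]
  have "?t * inner g (axis j 1 - axis i 1) \<le> 0" by simp
  then have "inner g (axis j 1 - axis i 1) \<le> 0"
    using pos by (simp add: mult_le_0_iff)
  then show ?thesis by (simp add: inner_diff_right inner_axis)
qed

lemma taylor_upper:
  fixes f :: "'a::real_inner \<Rightarrow> real" and G :: "'a \<Rightarrow> 'a"
  assumes der: "\<And>x. (f has_derivative (\<lambda>h. inner (G x) h)) (at x)"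
    and bnd: "\<And>s. 0 \<le> s \<Longrightarrow> s \<le> 1 \<Longrightarrow> inner (G (a + s *\<^sub>R d) - G a) d \<le> M * s * (norm d)\<^sup>2"
  shows "f (a + d) \<le> f a + inner (G a) d + M / 2 * (norm d)\<^sup>2"
proof -
  define h where "h s = f (a + s *\<^sub>R d) - s * inner (G a) d - M / 2 * s\<^sup>2 * (norm d)\<^sup>2" for s
  have D: "DERIV h s :> inner (G (a + s *\<^sub>R d)) d - inner (G a) d - M * s * (norm d)\<^sup>2" for s
  proof -
    have "((\<lambda>s. f (a + s *\<^sub>R d)) has_derivative (\<lambda>t. inner (G (a + s *\<^sub>R d)) (t *\<^sub>R d))) (at s)"
      by (rule has_derivative_compose[OF _ der]) (auto intro!: derivative_eq_intros)
    then have "DERIV (\<lambda>s. f (a + s *\<^sub>R d)) s :> inner (G (a + s *\<^sub>R d)) d"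
      by (simp add: has_field_derivative_def mult_commute_abs)
    then show ?thesis unfolding h_def
      by (auto intro!: derivative_eq_intros simp: power2_eq_square)
  qed
  have "h 1 \<le> h 0"
  proof (rule DERIV_nonpos_imp_nonincreasing[of 0 1 h])
    fix s :: real assume "0 \<le> s" "s \<le> 1"
    then show "\<exists>y. DERIV h s :> y \<and> y \<le> 0"
      using D[of s] bnd[of s] by (auto simp: inner_diff_left)
  qed simp
  then show ?thesis by (simp add: h_def)
qed

lemma taylor_lower:
  fixes f :: "'a::real_inner \<Rightarrow> real" and G :: "'a \<Rightarrow> 'a"
  assumes der: "\<And>x. (f has_derivative (\<lambda>h. inner (G x) h)) (at x)"
    and bnd: "\<And>s. 0 \<le> s \<Longrightarrow> s \<le> 1 \<Longrightarrow> inner (G (a + s *\<^sub>R d) - G a) d \<ge> M * s * (norm d)\<^sup>2"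
  shows "f (a + d) \<ge> f a + inner (G a) d + M / 2 * (norm d)\<^sup>2"
proof -
  define h where "h s = f (a + s *\<^sub>R d) - s * inner (G a) d - M / 2 * s\<^sup>2 * (norm d)\<^sup>2" for s
  have D: "DERIV h s :> inner (G (a + s *\<^sub>R d)) d - inner (G a) d - M * s * (norm d)\<^sup>2" for s
  proof -
    have "((\<lambda>s. f (a + s *\<^sub>R d)) has_derivative (\<lambda>t. inner (G (a + s *\<^sub>R d)) (t *\<^sub>R d))) (at s)"
      by (rule has_derivative_compose[OF _ der]) (auto intro!: derivative_eq_intros)
    then have "DERIV (\<lambda>s. f (a + s *\<^sub>R d)) s :> inner (G (a + s *\<^sub>R d)) d"
      by (simp add: has_field_derivative_def mult_commute_abs)
    then show ?thesis unfolding h_def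
      by (auto intro!: derivative_eq_intros simp: power2_eq_square)
  qed
  have "h 0 \<le> h 1"
  proof (rule DERIV_nonneg_imp_nondecreasing[of 0 1 h])
    fix s :: real assume "0 \<le> s" "s \<le> 1"
    then show "\<exists>y. DERIV h s :> y \<and> y \<ge> 0"
      using D[of s] bnd[of s] by (auto simp: inner_diff_left)
  qed simp
  then show ?thesis by (simp add: h_def)
qed

lemma norm_pair_same2: "norm ((x, y) - (x', y)) = norm (x - x')"
  by (simp add: norm_Pair)

lemma norm_pair_same1: "norm ((x, y) - (x, y')) = norm (y - y')"
  by (simp add: norm_Pair)

lemma gradx_f_diff: "gradx_f gF x y - gradx_f gF x y' = (\<Sum>i\<in>UNIV. (y - y') $ i *\<^sub>R gF i x)"
  by (simp add: gradx_f_def sum_subtractf[symmetric] scaleR_diff_left)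

locale sgda =
  fixes F :: "real^'n \<Rightarrow> real^'m"
    and gF :: "'m \<Rightarrow> real^'n \<Rightarrow> real^'n"
    and L p :: real
  assumes deriv: "\<And>i x. ((\<lambda>u. F u $ i) has_derivative (\<lambda>h. gF i x \<bullet> h)) (at x)"
    and L_pos: "L > 0"
    and lip_x: "\<And>x x' y y'. y \<in> prob_simplex \<Longrightarrow> y' \<in> prob_simplex \<Longrightarrow>
        norm (gradx_f gF x y - gradx_f gF x' y') \<le> L * norm ((x, y) - (x', y'))"
    and lip_y: "\<And>x x' (y::real^'m) y'. y \<in> prob_simplex \<Longrightarrow> y' \<in> prob_simplex \<Longrightarrow>
        norm (F x - F x') \<le> L * norm ((x, y) - (x', y'))"
    and psi_bdd: "\<exists>b. \<forall>x. b \<le> psi F x"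
    and pL: "p > 3 * L"
begin

abbreviation "K \<equiv> Kfun F p"
abbreviation "gK \<equiv> gradx_K gF p"
abbreviation "xm \<equiv> xopt F p"
definition "mu = p - L"

lemma mu_pos: "mu > 0" and mu_ge: "mu \<ge> 2 * L" and p_pos: "p > 0"
  using pL L_pos by (auto simp: mu_def)

lemma F_lip: "norm (F x - F x') \<le> L * norm (x - x')"
  using lip_y[OF axis_simplex axis_simplex, of x x' undefined undefined] by (simp add: norm_pair_same2)

lemma gradf_lip: "y \<in> prob_simplex \<Longrightarrow> norm (gradx_f gF x y - gradx_f gF x' y) \<le> L * norm (x - x')"
  using lip_x[of y y x x'] by (simp add: norm_pair_same2)

lemma gradf_lip_y: "y \<in> prob_simplex \<Longrightarrow> y' \<in> prob_simplex \<Longrightarrow> norm (gradx_f gF x y - gradx_f gF x y') \<le> L * norm (y - y')"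
  using lip_x[of y y' x x] by (simp add: norm_pair_same1)

lemma gradx_f_axis: "gradx_f gF x (axis i 1) = gF i x"
proof -
  have "gradx_f gF x (axis i 1) = (\<Sum>j\<in>UNIV. (if j = i then gF i x else 0))"
    unfolding gradx_f_def by (intro sum.cong) (auto simp: axis_def)
  then show ?thesis by (simp add: sum.delta)
qed

lemma gF_lip: "norm (gF i x - gF i x') \<le> L * norm (x - x')"
  using gradf_lip[of "axis i 1" x x'] axis_simplex[of i] by (simp add: gradx_f_axis)

lemma F_cont: "continuous_on UNIV F"
  by (rule lipschitz_on_continuous_on[of L]) (auto intro!: lipschitz_onI F_lip simp: dist_norm L_pos less_imp_le)

lemma gF_cont: "continuous_on UNIV (gF i)"
  by (rule lipschitz_on_continuous_on[of L]) (auto intro!: lipschitz_onI gF_lip simp: dist_norm L_pos less_imp_le)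

lemma fval_deriv: "((\<lambda>x. fval F x y) has_derivative (\<lambda>h. inner (gradx_f gF x y) h)) (at x)"
proof -
  have e: "(\<lambda>x. fval F x y) = (\<lambda>x. \<Sum>i\<in>UNIV. F x $ i * y $ i)"
    by (simp add: fval_def inner_vec_def)
  have "((\<lambda>x. \<Sum>i\<in>UNIV. F x $ i * y $ i) has_derivative (\<lambda>h. \<Sum>i\<in>UNIV. (gF i x \<bullet> h) * y $ i)) (at x)"
    by (intro has_derivative_sum has_derivative_mult_left deriv)
  moreover have "(\<lambda>h. \<Sum>i\<in>UNIV. (gF i x \<bullet> h) * y $ i) = (\<lambda>h. inner (gradx_f gF x y) h)"
    by (simp add: gradx_f_def inner_sum_left mult.commute)
  ultimately show ?thesis unfolding e by metis
qed

lemma K_deriv: "((\<lambda>x. K x z y) has_derivative (\<lambda>h. inner (gK x z y) h)) (at x)"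
proof -
  have e: "(\<lambda>x. K x z y) = (\<lambda>x. fval F x y + p / 2 * inner (x - z) (x - z))"
    by (simp add: Kfun_def power2_norm_eq_inner)
  have "((\<lambda>x. fval F x y + p / 2 * inner (x - z) (x - z)) has_derivative
        (\<lambda>h. inner (gradx_f gF x y) h + p / 2 * (inner (x - z) h + inner h (x - z)))) (at x)"
    by (rule has_derivative_add[OF fval_deriv]) (auto intro!: derivative_eq_intros)
  moreover have "(\<lambda>h. inner (gradx_f gF x y) h + p / 2 * (inner (x - z) h + inner h (x - z))) = (\<lambda>h. inner (gK x z y) h)"
    by (auto simp: gradx_K_def inner_add_left inner_commute algebra_simps)
  ultimately show ?thesis by (simp add: e)
qed

lemma gK_diff: "gK a z y - gK b z y = (gradx_f gF a y - gradx_f gF b y) + p *\<^sub>R (a - b)"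
  by (simp add: gradx_K_def algebra_simps)

lemma gK_mono: assumes "y \<in> prob_simplex"
  shows "inner (gK a z y - gK b z y) (a - b) \<ge> mu * (norm (a - b))\<^sup>2"
    and "inner (gK a z y - gK b z y) (a - b) \<le> (p + L) * (norm (a - b))\<^sup>2"
proof -
  have "\<bar>inner (gradx_f gF a y - gradx_f gF b y) (a - b)\<bar> \<le> L * (norm (a - b))\<^sup>2"
    using Cauchy_Schwarz_ineq2[of "gradx_f gF a y - gradx_f gF b y" "a - b"] gradf_lip[OF assms, of a b]
    by (smt (verit, ccfv_SIG) mult_right_mono norm_ge_zero power2_eq_square mult.assoc)
  moreover have "inner (gK a z y - gK b z y) (a - b) = inner (gradx_f gF a y - gradx_f gF b y) (a - b) + p * (norm (a - b))\<^sup>2"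
    by (simp add: gK_diff inner_add_left power2_norm_eq_inner)
  ultimately show "inner (gK a z y - gK b z y) (a - b) \<ge> mu * (norm (a - b))\<^sup>2"
    "inner (gK a z y - gK b z y) (a - b) \<le> (p + L) * (norm (a - b))\<^sup>2"
    by (auto simp: mu_def algebra_simps abs_le_iff)
qed

lemma gK_lip: assumes "y \<in> prob_simplex"
  shows "norm (gK a z y - gK b z y) \<le> (p + L) * norm (a - b)"
proof -
  have "norm (gK a z y - gK b z y) \<le> norm (gradx_f gF a y - gradx_f gF b y) + norm (p *\<^sub>R (a - b))"
    unfolding gK_diff by (rule norm_triangle_ineq)
  also have "\<dots> \<le> L * norm (a - b) + p * norm (a - b)"
    using gradf_lip[OF assms] p_pos by simp
  finally show ?thesis by (simp add: algebra_simps)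
qed

lemma K_upper: assumes "y \<in> prob_simplex"
  shows "K (a + d) z y \<le> K a z y + inner (gK a z y) d + (p + L) / 2 * (norm d)\<^sup>2"
proof (rule taylor_upper[where f = "\<lambda>x. K x z y", OF K_deriv])
  fix s :: real assume s: "0 \<le> s" "s \<le> 1"
  have "inner (gK (a + s *\<^sub>R d) z y - gK a z y) (s *\<^sub>R d) \<le> (p + L) * (norm (s *\<^sub>R d))\<^sup>2"
    using gK_mono(2)[OF assms, where a="a + s *\<^sub>R d" and z=z and b=a] by simp
  then have "s * inner (gK (a + s *\<^sub>R d) z y - gK a z y) d \<le> s * ((p + L) * s * (norm d)\<^sup>2)"
    using s by (simp add: power2_eq_square algebra_simps)
  then show "inner (gK (a + s *\<^sub>R d) z y - gK a z y) d \<le> (p + L) * s * (norm d)\<^sup>2"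
    using s by (cases "s = 0") (auto simp: gK_diff)
qed

lemma K_lower: assumes "y \<in> prob_simplex"
  shows "K (a + d) z y \<ge> K a z y + inner (gK a z y) d + mu / 2 * (norm d)\<^sup>2"
proof (rule taylor_lower[where f = "\<lambda>x. K x z y", OF K_deriv])
  fix s :: real assume s: "0 \<le> s" "s \<le> 1"
  have "inner (gK (a + s *\<^sub>R d) z y - gK a z y) (s *\<^sub>R d) \<ge> mu * (norm (s *\<^sub>R d))\<^sup>2"
    using gK_mono(1)[OF assms, where a="a + s *\<^sub>R d" and z=z and b=a] by simp
  then have "s * inner (gK (a + s *\<^sub>R d) z y - gK a z y) d \<ge> s * (mu * s * (norm d)\<^sup>2)"
    using s by (simp add: power2_eq_square algebra_simps)
  then show "inner (gK (a + s *\<^sub>R d) z y - gK a z y) d \<ge> mu * s * (norm d)\<^sup>2"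
    using s by (cases "s = 0") (auto simp: gK_diff)
qed

end

context sgda begin

lemma K_cont: "continuous_on S (\<lambda>x. K x z y)"
  by (intro continuous_at_imp_continuous_on ballI has_derivative_continuous[OF K_deriv])

lemma aux_half: "(0::real) \<le> - t * N + t / 2 * N \<Longrightarrow> 0 < t \<Longrightarrow> N \<le> 0"
proof -
  assume a: "(0::real) \<le> - t * N + t / 2 * N" and t: "0 < t"
  have "- t * N + t / 2 * N = - (t * N) / 2" by (simp add: field_simps)
  with a have "t * N \<le> 0" by linarith
  with t show "N \<le> 0" by (simp add: mult_le_0_iff)
qed

lemma K_ex_min: assumes y: "y \<in> prob_simplex"
  shows "\<exists>x. \<forall>x'. K x z y \<le> K x' z y"
proof -
  define S where "S = {w. K w z y \<le> K z z y}"
  have bnd: "norm (w - z) \<le> 2 * norm (gK z z y) / mu" if "w \<in> S" for w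
  proof -
    have zw: "z + (w - z) = w" by simp
    have "K (z + (w - z)) z y \<ge> K z z y + inner (gK z z y) (w - z) + mu / 2 * (norm (w - z))\<^sup>2"
      by (rule K_lower[OF y])
    moreover have "K w z y \<le> K z z y" using that by (simp add: S_def)
    ultimately have "mu / 2 * (norm (w - z))\<^sup>2 \<le> norm (gK z z y) * norm (w - z)"
      using norm_cauchy_schwarz[of "- gK z z y" "w - z"] by (simp only: zw inner_minus_left norm_minus_cancel)
    then have "mu / 2 * norm (w - z) \<le> norm (gK z z y) \<or> norm (w - z) = 0"
      by (auto simp: power2_eq_square)
    then show ?thesis using mu_pos by (auto simp: field_simps)
  qed
  have "bounded S"
    unfolding bounded_iff
  proof (intro exI ballI)
    fix w assume "w \<in> S"
    then show "norm w \<le> norm z + 2 * norm (gK z z y) / mu"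
      using bnd norm_triangle_ineq2[of w z] by fastforce
  qed
  moreover have "closed S"
    unfolding S_def by (intro closed_Collect_le K_cont continuous_intros)
  ultimately have "compact S" by (simp add: compact_eq_bounded_closed)
  moreover have "S \<noteq> {}" by (auto simp: S_def)
  ultimately obtain x where x: "x \<in> S" "\<forall>w\<in>S. K x z y \<le> K w z y"
    using continuous_attains_inf[of S "\<lambda>x. K x z y"] K_cont by blast
  have "K x z y \<le> K x' z y" for x'
    using x by (cases "x' \<in> S") (auto simp: S_def)
  then show ?thesis by blast
qed

lemma xm_min: "y \<in> prob_simplex \<Longrightarrow> K (xm y z) z y \<le> K w z y"
  unfolding xopt_def using someI_ex[OF K_ex_min] by blast

lemma xm_grad: assumes y: "y \<in> prob_simplex" shows "gK (xm y z) z y = 0"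
proof -
  let ?x = "xm y z" and ?g = "gK (xm y z) z y"
  let ?t = "1 / (p + L)"
  have 1: "K (?x + (- ?t *\<^sub>R ?g)) z y \<le> K ?x z y + inner ?g (- ?t *\<^sub>R ?g) + (p + L) / 2 * (norm (- ?t *\<^sub>R ?g))\<^sup>2"
    by (rule K_upper[OF y])
  have 2: "K ?x z y \<le> K (?x + (- ?t *\<^sub>R ?g)) z y" by (rule xm_min[OF y])
  have e1: "inner ?g (- ?t *\<^sub>R ?g) = - ?t * (norm ?g)\<^sup>2"
    by (simp add: power2_norm_eq_inner)
  have e2: "(norm (- ?t *\<^sub>R ?g))\<^sup>2 = ?t\<^sup>2 * (norm ?g)\<^sup>2"
    by (simp only: norm_minus_cancel norm_scaleR power_mult_distrib power2_abs power2_minus)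
  have e3: "(p + L) / 2 * ?t\<^sup>2 = ?t / 2" using p_pos L_pos by (simp add: power2_eq_square)
  have "0 \<le> inner ?g (- ?t *\<^sub>R ?g) + (p + L) / 2 * (norm (- ?t *\<^sub>R ?g))\<^sup>2" using 1 2 by linarith
  then have "0 \<le> - ?t * (norm ?g)\<^sup>2 + ((p + L) / 2 * ?t\<^sup>2) * (norm ?g)\<^sup>2"
    by (simp only: e1 e2 mult.assoc)
  then have "0 \<le> - ?t * (norm ?g)\<^sup>2 + ?t / 2 * (norm ?g)\<^sup>2" by (simp only: e3)
  moreover have "?t > 0" using p_pos L_pos by simp
  ultimately have "(norm ?g)\<^sup>2 \<le> 0" by (rule aux_half)
  then show ?thesis by simp
qed

lemma xm_growth: assumes y: "y \<in> prob_simplex"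
  shows "K w z y \<ge> K (xm y z) z y + mu / 2 * (norm (w - xm y z))\<^sup>2"
  using K_lower[OF y, where a="xm y z" and d="w - xm y z" and z=z] xm_grad[OF y, of z] by simp

lemma dfun_eq: "y \<in> prob_simplex \<Longrightarrow> dfun F p y z = K (xm y z) z y"
  unfolding dfun_def by (rule cInf_eq_minimum) (auto simp: xm_min)

lemma xm_lip: assumes y: "y \<in> prob_simplex" and y': "y' \<in> prob_simplex"
  shows "norm (xm y z - xm y' z') \<le> L / mu * norm (y - y') + p / mu * norm (z - z')"
proof -
  let ?x1 = "xm y z" and ?x2 = "xm y' z'"
  have "mu * (norm (?x1 - ?x2))\<^sup>2 \<le> inner (gK ?x1 z' y' - gK ?x2 z' y') (?x1 - ?x2)"
    by (rule gK_mono(1)[OF y'])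
  also have "gK ?x1 z' y' - gK ?x2 z' y' = gK ?x1 z' y' - gK ?x1 z y"
    using xm_grad[OF y, of z] xm_grad[OF y', of z'] by simp
  also have "\<dots> = (gradx_f gF ?x1 y' - gradx_f gF ?x1 y) + p *\<^sub>R (z - z')"
    by (simp add: gradx_K_def algebra_simps)
  also have "inner \<dots> (?x1 - ?x2) \<le> norm ((gradx_f gF ?x1 y' - gradx_f gF ?x1 y) + p *\<^sub>R (z - z')) * norm (?x1 - ?x2)"
    by (rule norm_cauchy_schwarz)
  also have "\<dots> \<le> (L * norm (y - y') + p * norm (z - z')) * norm (?x1 - ?x2)"
  proof (rule mult_right_mono)
    have "norm ((gradx_f gF ?x1 y' - gradx_f gF ?x1 y) + p *\<^sub>R (z - z')) \<le> norm (gradx_f gF ?x1 y' - gradx_f gF ?x1 y) + norm (p *\<^sub>R (z - z'))"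
      by (rule norm_triangle_ineq)
    also have "\<dots> \<le> L * norm (y - y') + p * norm (z - z')"
      using gradf_lip_y[OF y' y, of ?x1] p_pos norm_minus_commute[of y y'] by simp
    finally show "norm ((gradx_f gF ?x1 y' - gradx_f gF ?x1 y) + p *\<^sub>R (z - z')) \<le> L * norm (y - y') + p * norm (z - z')" .
  qed simp
  finally have *: "mu * (norm (?x1 - ?x2))\<^sup>2 \<le> (L * norm (y - y') + p * norm (z - z')) * norm (?x1 - ?x2)" .
  show ?thesis
  proof (cases "norm (?x1 - ?x2) = 0")
    case True then show ?thesis using mu_pos L_pos p_pos by simp
  next
    case False
    then have "mu * norm (?x1 - ?x2) \<le> L * norm (y - y') + p * norm (z - z')"
      using * by (simp add: power2_eq_square)
    then show ?thesis using mu_pos by (simp add: field_simps)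
  qed
qed

lemma xm_lip_y: "y \<in> prob_simplex \<Longrightarrow> y' \<in> prob_simplex \<Longrightarrow> norm (xm y z - xm y' z) \<le> L / mu * norm (y - y')"
  using xm_lip[of y y' z z] by simp

lemma xm_lip_z: "y \<in> prob_simplex \<Longrightarrow> norm (xm y z - xm y z') \<le> p / mu * norm (z - z')"
  using xm_lip[of y y z z'] by simp

lemma xm_dist: assumes y: "y \<in> prob_simplex"
  shows "norm (x - xm y z) \<le> norm (gK x z y) / mu"
proof -
  have "mu * (norm (x - xm y z))\<^sup>2 \<le> inner (gK x z y - gK (xm y z) z y) (x - xm y z)"
    by (rule gK_mono(1)[OF y])
  also have "\<dots> \<le> norm (gK x z y) * norm (x - xm y z)"
    using xm_grad[OF y] norm_cauchy_schwarz by simp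
  finally have *: "mu * (norm (x - xm y z))\<^sup>2 \<le> norm (gK x z y) * norm (x - xm y z)" .
  show ?thesis
  proof (cases "norm (x - xm y z) = 0")
    case True then show ?thesis using mu_pos by simp
  next
    case False
    then have "mu * norm (x - xm y z) \<le> norm (gK x z y)"
      using * by (simp add: power2_eq_square)
    then show ?thesis using mu_pos by (simp add: field_simps)
  qed
qed

lemma J_bound: assumes y: "y \<in> prob_simplex" and y': "y' \<in> prob_simplex"
  shows "norm (gradx_f gF (xm y z) y - gradx_f gF (xm y z) y') \<le> (p + L) * norm (xm y z - xm y' z)"
proof -
  let ?x1 = "xm y z" and ?x2 = "xm y' z"
  have "gradx_f gF ?x1 y - gradx_f gF ?x1 y' = gK ?x1 z y - gK ?x1 z y'"
    by (simp add: gradx_K_def)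
  also have "\<dots> = gK ?x2 z y' - gK ?x1 z y'"
    using xm_grad[OF y, of z] xm_grad[OF y', of z] by simp
  finally have "norm (gradx_f gF ?x1 y - gradx_f gF ?x1 y') = norm (gK ?x2 z y' - gK ?x1 z y')" by simp
  also have "\<dots> \<le> (p + L) * norm (?x2 - ?x1)" by (rule gK_lip[OF y'])
  finally show ?thesis by (simp only: norm_minus_commute[of ?x2 ?x1])
qed

lemma K_y_diff: "K x z y' - K x z y = inner (F x) (y' - y)"
  by (simp add: Kfun_def fval_def inner_diff_right)

lemma crossing: assumes y: "y \<in> prob_simplex" and y': "y' \<in> prob_simplex"
  shows "mu * (norm (xm y z - xm y' z))\<^sup>2 \<le> inner (F (xm y z) - F (xm y' z)) (y' - y)"
proof -
  let ?x1 = "xm y z" and ?x2 = "xm y' z"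
  have a: "K ?x1 z y' \<ge> K ?x2 z y' + mu / 2 * (norm (?x1 - ?x2))\<^sup>2" by (rule xm_growth[OF y'])
  have b: "K ?x2 z y \<ge> K ?x1 z y + mu / 2 * (norm (?x2 - ?x1))\<^sup>2" by (rule xm_growth[OF y])
  have c: "K ?x1 z y' - K ?x1 z y = inner (F ?x1) (y' - y)" by (rule K_y_diff)
  have d: "K ?x2 z y' - K ?x2 z y = inner (F ?x2) (y' - y)" by (rule K_y_diff)
  have "norm (?x2 - ?x1) = norm (?x1 - ?x2)" by (rule norm_minus_commute)
  then have "mu / 2 * (norm (?x2 - ?x1))\<^sup>2 = (mu * (norm (?x1 - ?x2))\<^sup>2) / 2" by simp
  moreover have "mu / 2 * (norm (?x1 - ?x2))\<^sup>2 = (mu * (norm (?x1 - ?x2))\<^sup>2) / 2" by simp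
  moreover have "inner (F ?x1 - F ?x2) (y' - y) = inner (F ?x1) (y' - y) - inner (F ?x2) (y' - y)"
    by (rule inner_diff_left)
  ultimately show ?thesis using a b c d by linarith
qed

end

context sgda begin

definition "dualopt z y \<longleftrightarrow> y \<in> prob_simplex \<and> (\<forall>w\<in>prob_simplex. inner (F (xm y z)) (w - y) \<le> 0)"

lemma dualopt_ex: "\<exists>y. dualopt z y"
proof -
  define T where "T y = proj_simplex (y + F (xm y z))" for y
  have "continuous_on prob_simplex T"
  proof (rule lipschitz_on_continuous_on[OF lipschitz_onI])
    fix a b :: "real^'m" assume a: "a \<in> prob_simplex" and b: "b \<in> prob_simplex"
    have "dist (T a) (T b) \<le> norm ((a + F (xm a z)) - (b + F (xm b z)))"
      unfolding T_def dist_norm by (rule proj_lip)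
    also have "\<dots> \<le> norm (a - b) + norm (F (xm a z) - F (xm b z))"
      by (metis (no_types, lifting) add_diff_add norm_triangle_ineq)
    also have "\<dots> \<le> norm (a - b) + L * (L / mu * norm (a - b))"
      using F_lip[of "xm a z" "xm b z"] xm_lip_y[OF a b, of z] L_pos
      by (smt (verit, best) mult_left_mono)
    also have "\<dots> = (1 + L * L / mu) * dist a b" by (simp add: dist_norm algebra_simps)
    finally show "dist (T a) (T b) \<le> (1 + L * L / mu) * dist a b" .
  next
    show "0 \<le> 1 + L * L / mu" using mu_pos by simp
  qed
  moreover have "T \<in> prob_simplex \<rightarrow> prob_simplex" by (auto simp: T_def proj_in)
  ultimately obtain y where y: "y \<in> prob_simplex" "T y = y"
    using brouwer[OF simplex_compact simplex_convex simplex_nonempty] by blast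
  have "inner (F (xm y z)) (w - y) \<le> 0" if "w \<in> prob_simplex" for w
    using proj_vi[OF that, of "y + F (xm y z)"] y by (simp add: T_def)
  then show ?thesis using y by (auto simp: dualopt_def)
qed

definition "ystar z = (SOME y. dualopt z y)"
definition "xs z = xm (ystar z) z"

lemma ystar: "dualopt z (ystar z)"
  unfolding ystar_def using someI_ex[OF dualopt_ex] .

lemma ystar_simplex: "ystar z \<in> prob_simplex"
  using ystar by (simp add: dualopt_def)

definition "Phi z x = psi F x + p / 2 * (norm (x - z))\<^sup>2"

lemma K_le_Phi: "y \<in> prob_simplex \<Longrightarrow> K x z y \<le> Phi z x"
  using simplex_inner_le[of y "F x"] by (simp add: Kfun_def fval_def Phi_def psi_def)

lemma dualopt_psi: assumes "dualopt z y" shows "inner (F (xm y z)) y = psi F (xm y z)"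
proof -
  let ?g = "F (xm y z)"
  have y: "y \<in> prob_simplex" using assms by (simp add: dualopt_def)
  obtain i where i: "Max (range (\<lambda>i. ?g $ i)) = ?g $ i" using Max_attained by blast
  have "inner ?g (axis i 1 - y) \<le> 0" using assms axis_simplex[of i] unfolding dualopt_def by blast
  then have "?g $ i \<le> inner ?g y" by (simp add: inner_diff_right inner_axis)
  moreover have "inner ?g y \<le> Max (range (\<lambda>i. ?g $ i))" by (rule simplex_inner_le[OF y])
  ultimately show ?thesis using i by (simp add: psi_def)
qed

lemma dualopt_K: "dualopt z y \<Longrightarrow> K (xm y z) z y = Phi z (xm y z)"
  using dualopt_psi by (simp add: Kfun_def fval_def Phi_def)

lemma dualopt_min: assumes "dualopt z y" shows "Phi z (xm y z) \<le> Phi z w"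
proof -
  have y: "y \<in> prob_simplex" using assms by (simp add: dualopt_def)
  have "Phi z (xm y z) = K (xm y z) z y" using dualopt_K[OF assms] by simp
  also have "\<dots> \<le> K w z y" by (rule xm_min[OF y])
  also have "\<dots> \<le> Phi z w" by (rule K_le_Phi[OF y])
  finally show ?thesis .
qed

lemma SUP_K: "(SUP y\<in>prob_simplex. K x z y) = Phi z x"
proof (rule cSup_eq_maximum)
  obtain i where i: "Max (range (\<lambda>i. F x $ i)) = F x $ i" using Max_attained by blast
  have "K x z (axis i 1) = Phi z x"
    using i by (simp add: Kfun_def fval_def Phi_def psi_def inner_axis)
  then show "Phi z x \<in> (\<lambda>y. K x z y) ` prob_simplex" using axis_simplex by (metis image_eqI)
  show "\<And>v. v \<in> (\<lambda>y. K x z y) ` prob_simplex \<Longrightarrow> v \<le> Phi z x"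
    using K_le_Phi by auto
qed

lemma Pfun_eq: "Pfun F p z = Phi z (xs z)"
  unfolding Pfun_def SUP_K xs_def
  by (rule cInf_eq_minimum) (auto simp: dualopt_min[OF ystar])

lemma Pfun_le: "Pfun F p z \<le> Phi z w"
  unfolding Pfun_eq xs_def by (rule dualopt_min[OF ystar])

lemma dfun_le_P: assumes y: "y \<in> prob_simplex" shows "dfun F p y z \<le> Pfun F p z"
proof -
  have "dfun F p y z = K (xm y z) z y" by (rule dfun_eq[OF y])
  also have "\<dots> \<le> K (xs z) z y" by (rule xm_min[OF y])
  also have "\<dots> \<le> Phi z (xs z)" by (rule K_le_Phi[OF y])
  finally show ?thesis by (simp add: Pfun_eq)
qed

lemma phi_ge_P: assumes y: "y \<in> prob_simplex" shows "phi F p x y z \<ge> Pfun F p z"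
proof -
  have "dfun F p y z \<le> K x z y" using dfun_eq[OF y] xm_min[OF y] by simp
  then show ?thesis using dfun_le_P[OF y, of z] by (simp add: phi_def)
qed

end

lemma sc_contra:
  fixes F :: "real^'n \<Rightarrow> real^'m" and gF :: "'m \<Rightarrow> real^'n \<Rightarrow> real^'n"
  assumes sc: "strict_complementarity F gF"
    and kkt: "KKT F gF x y \<mu> \<nu>"
    and v0: "v \<noteq> 0" and vsum: "(\<Sum>i\<in>UNIV. v $ i) = 0"
    and vsupp: "\<And>i. \<nu> $ i \<noteq> 0 \<Longrightarrow> v $ i = 0"
    and vker: "(\<Sum>i\<in>UNIV. v $ i *\<^sub>R gF i x) = 0"
  shows False
proof -
  from kkt have y0: "\<forall>i. 0 \<le> y $ i" and ysum: "(\<Sum>i\<in>UNIV. y $ i) = 1"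
    and yker: "(\<Sum>i\<in>UNIV. y $ i *\<^sub>R gF i x) = 0"
    and mu_nu: "\<forall>i. \<mu> - \<nu> $ i = F x $ i" and nu0: "\<forall>i. 0 \<le> \<nu> $ i"
    and compl: "\<forall>i. \<nu> $ i * y $ i = 0"
    by (auto simp: KKT_def)
  define N where "N = {i. v $ i < 0}"
  have "N \<noteq> {}"
  proof
    assume "N = {}"
    then have vge: "\<forall>i. 0 \<le> v $ i" by (auto simp: N_def not_less)
    then have "\<forall>i\<in>UNIV. v $ i = 0" using vsum by (simp add: sum_nonneg_eq_0_iff)
    then show False using v0 by (simp add: vec_eq_iff)
  qed
  have finN: "finite N" by simp
  define s where "s = Min ((\<lambda>i. y $ i / (- v $ i)) ` N)"
  have "s \<in> (\<lambda>i. y $ i / (- v $ i)) ` N" unfolding s_def using \<open>N \<noteq> {}\<close> by (intro Min_in) auto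
  then obtain i0 where i0: "i0 \<in> N" "s = y $ i0 / (- v $ i0)" by blast
  have s_le: "s \<le> y $ i / (- v $ i)" if "i \<in> N" for i
    unfolding s_def using that by (intro Min_le) auto
  have s0: "0 \<le> s" using i0 y0 by (auto simp: N_def divide_nonneg_neg)
  define y' where "y' = y + s *\<^sub>R v"
  have y'0: "0 \<le> y' $ i" for i
  proof (cases "i \<in> N")
    case True
    then have vi: "v $ i < 0" by (simp add: N_def)
    have "s * (- v $ i) \<le> y $ i / (- v $ i) * (- v $ i)" using vi by (intro mult_right_mono[OF s_le[OF True]]) simp
    also have "\<dots> = y $ i" using vi by (simp add: field_simps)
    finally have "s * (- v $ i) \<le> y $ i" .
    moreover have "s * (- v $ i) = - (s * v $ i)" by simp
    moreover have "y' $ i = y $ i + s * v $ i" by (simp add: y'_def)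
    ultimately show ?thesis by linarith
  next
    case False
    then have "0 \<le> v $ i" by (simp add: N_def)
    then show ?thesis using y0 s0 by (simp add: y'_def)
  qed
  have y'i0: "y' $ i0 = 0" using i0 by (simp add: y'_def N_def)
  have "KKT F gF x y' \<mu> \<nu>"
    unfolding KKT_def
  proof (intro conjI allI)
    show "(\<Sum>i\<in>UNIV. y' $ i *\<^sub>R gF i x) = 0"
    proof -
      have "(\<Sum>i\<in>UNIV. y' $ i *\<^sub>R gF i x) = (\<Sum>i\<in>UNIV. y $ i *\<^sub>R gF i x) + s *\<^sub>R (\<Sum>i\<in>UNIV. v $ i *\<^sub>R gF i x)"
        by (simp add: y'_def scaleR_add_left sum.distrib scaleR_sum_right)
      then show ?thesis using yker vker by simp
    qed
    show "(\<Sum>i\<in>UNIV. y' $ i) = 1" using ysum vsum by (simp add: y'_def sum.distrib sum_distrib_left[symmetric])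
    fix i
    show "0 \<le> y' $ i" by (rule y'0)
    show "\<mu> - \<nu> $ i = F x $ i" using mu_nu by simp
    show "0 \<le> \<nu> $ i" using nu0 by simp
    show "\<nu> $ i * y' $ i = 0"
    proof (cases "\<nu> $ i = 0")
      case True then show ?thesis by simp
    next
      case False
      then have "y $ i = 0" using compl[rule_format, of i] by simp
      moreover have "v $ i = 0" using vsupp False by simp
      ultimately show ?thesis by (simp add: y'_def)
    qed
  qed
  then have "\<nu> $ i0 > 0" using sc y'i0 by (auto simp: strict_complementarity_def)
  moreover have "v $ i0 \<noteq> 0" using i0 by (simp add: N_def)
  ultimately show False using vsupp[of i0] by simp
qed

context sgda begin

definition "yplus a y z = proj_simplex (y + a *\<^sub>R F (xm y z))"
definition "uu a y z = xm (yplus a y z) z - xs z"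

lemma yplus_simplex: "yplus a y z \<in> prob_simplex"
  by (simp add: yplus_def proj_in)

lemma eb_basic: assumes a: "a > 0" and y: "y \<in> prob_simplex"
  shows "mu * (norm (uu a y z))\<^sup>2 \<le> (1 / a + L * L / mu) * norm (y - yplus a y z) * norm (yplus a y z - ystar z)"
proof -
  let ?yp = "yplus a y z" and ?ys = "ystar z"
  let ?g = "F (xm y z)" and ?gp = "F (xm ?yp z)" and ?gs = "F (xm ?ys z)"
  have yp: "?yp \<in> prob_simplex" by (rule yplus_simplex)
  have ys: "?ys \<in> prob_simplex" by (rule ystar_simplex)
  have "mu * (norm (xm ?ys z - xm ?yp z))\<^sup>2 \<le> inner (?gs - ?gp) (?yp - ?ys)"
    by (rule crossing[OF ys yp])
  moreover have "norm (xm ?ys z - xm ?yp z) = norm (uu a y z)"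
    by (simp add: uu_def xs_def norm_minus_commute)
  moreover have "inner ?gs (?yp - ?ys) \<le> 0" using ystar[of z] yp by (simp add: dualopt_def)
  moreover have "inner (y + a *\<^sub>R ?g - ?yp) (?ys - ?yp) \<le> 0"
    unfolding yplus_def by (rule proj_vi[OF ys])
  moreover have "inner (y + a *\<^sub>R ?g - ?yp) (?ys - ?yp) = inner (y - ?yp) (?ys - ?yp) + a * inner ?g (?ys - ?yp)"
    by (simp add: inner_add_left inner_diff_left algebra_simps)
  moreover have "inner (y - ?yp) (?ys - ?yp) \<ge> - (norm (y - ?yp) * norm (?yp - ?ys))"
    using norm_cauchy_schwarz[of "y - ?yp" "?yp - ?ys"] by (simp add: inner_diff_right inner_diff_left)
  moreover have "inner (?gp - ?g) (?ys - ?yp) \<le> L * L / mu * norm (y - ?yp) * norm (?yp - ?ys)"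
  proof -
    have "inner (?gp - ?g) (?ys - ?yp) \<le> norm (?gp - ?g) * norm (?ys - ?yp)" by (rule norm_cauchy_schwarz)
    also have "norm (?gp - ?g) \<le> L * (L / mu * norm (y - ?yp))"
    proof -
      have "norm (?gp - ?g) \<le> L * norm (xm ?yp z - xm y z)" by (rule F_lip)
      also have "norm (xm ?yp z - xm y z) \<le> L / mu * norm (?yp - y)" by (rule xm_lip_y[OF yp y])
      finally show ?thesis using L_pos by (simp add: norm_minus_commute)
    qed
    then have "norm (?gp - ?g) * norm (?ys - ?yp) \<le> L * (L / mu * norm (y - ?yp)) * norm (?ys - ?yp)"
      by (rule mult_right_mono) simp
    finally show ?thesis by (simp add: norm_minus_commute mult.assoc)
  qed
  ultimately have A: "mu * (norm (uu a y z))\<^sup>2 \<le> - inner ?gp (?yp - ?ys)"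
    and B: "a * inner ?g (?ys - ?yp) \<le> norm (y - ?yp) * norm (?yp - ?ys)"
    and C: "inner (?gp - ?g) (?ys - ?yp) \<le> L * L / mu * norm (y - ?yp) * norm (?yp - ?ys)"
    by (simp_all add: inner_diff_left)
  have D: "- inner ?gp (?yp - ?ys) = inner ?g (?ys - ?yp) + inner (?gp - ?g) (?ys - ?yp)"
    by (simp add: inner_diff_left inner_diff_right)
  have E: "inner ?g (?ys - ?yp) \<le> 1 / a * (norm (y - ?yp) * norm (?yp - ?ys))"
    using B a by (simp add: field_simps mult.commute)
  have "mu * (norm (uu a y z))\<^sup>2 \<le> 1 / a * (norm (y - ?yp) * norm (?yp - ?ys)) + L * L / mu * norm (y - ?yp) * norm (?yp - ?ys)"
    using A C D E by linarith
  then show ?thesis by (simp add: algebra_simps)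
qed

end

lemma ratio_aux:
  fixes u e w m c k :: real
  assumes u: "0 < u" and w: "0 < w" and m: "0 < m" and e: "0 \<le> e" and k: "0 < k"
    and h1: "k * e\<^sup>2 \<le> u\<^sup>2" and h2: "m * u\<^sup>2 \<le> c * e * w"
  shows "(u / w)\<^sup>2 \<le> (c / m)\<^sup>2 / k"
proof -
  have "0 \<le> m * u\<^sup>2" using m by simp
  then have "(m * u\<^sup>2)\<^sup>2 \<le> (c * e * w)\<^sup>2" by (rule power_mono[OF h2])
  then have A: "m\<^sup>2 * u\<^sup>2 * u\<^sup>2 \<le> c\<^sup>2 * w\<^sup>2 * e\<^sup>2" by (simp add: power_mult_distrib power2_eq_square algebra_simps)
  have "e\<^sup>2 \<le> u\<^sup>2 / k" using h1 k by (simp add: field_simps)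
  then have "c\<^sup>2 * w\<^sup>2 * e\<^sup>2 \<le> c\<^sup>2 * w\<^sup>2 * (u\<^sup>2 / k)" by (intro mult_left_mono) auto
  with A have "m\<^sup>2 * u\<^sup>2 * u\<^sup>2 \<le> (c\<^sup>2 * w\<^sup>2 / k) * u\<^sup>2" by (simp add: algebra_simps)
  then have "m\<^sup>2 * u\<^sup>2 \<le> c\<^sup>2 * w\<^sup>2 / k" by (rule mult_right_le_imp_le) (use u in simp)
  then show ?thesis using m w k by (simp add: field_simps power_divide)
qed

context sgda begin

lemma F_isCont: "isCont F x"
  using F_cont by (simp add: continuous_on_eq_continuous_at)

lemma gF_isCont: "isCont (gF i) x"
  using gF_cont by (simp add: continuous_on_eq_continuous_at)

lemma proj_isCont: "isCont (proj_simplex :: real^'m \<Rightarrow> real^'m) x"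
proof -
  have "continuous_on UNIV (proj_simplex :: real^'m \<Rightarrow> real^'m)"
    by (rule lipschitz_on_continuous_on[OF lipschitz_onI[of UNIV proj_simplex 1]]) (auto simp: dist_norm proj_lip)
  then show ?thesis by (simp add: continuous_on_eq_continuous_at)
qed

lemma xm_tendsto:
  assumes Y: "\<And>k. Y k \<in> prob_simplex" and yb: "yb \<in> prob_simplex"
    and YL: "Y \<longlonglongrightarrow> yb" and ZL: "Z \<longlonglongrightarrow> zb"
  shows "(\<lambda>k. xm (Y k) (Z k)) \<longlonglongrightarrow> xm yb zb"
proof (rule LIM_zero_cancel, rule Lim_null_comparison)
  show "\<forall>\<^sub>F k in sequentially. norm (xm (Y k) (Z k) - xm yb zb) \<le> L / mu * norm (Y k - yb) + p / mu * norm (Z k - zb)"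
    using xm_lip[OF Y yb] by simp
  have "(\<lambda>k. L / mu * norm (Y k - yb) + p / mu * norm (Z k - zb)) \<longlonglongrightarrow> L / mu * 0 + p / mu * 0"
    by (intro tendsto_intros tendsto_norm_zero LIM_zero YL ZL)
  then show "(\<lambda>k. L / mu * norm (Y k - yb) + p / mu * norm (Z k - zb)) \<longlonglongrightarrow> 0" by simp
qed

lemma yplus_tendsto:
  assumes Y: "\<And>k. Y k \<in> prob_simplex" and yb: "yb \<in> prob_simplex"
    and YL: "Y \<longlonglongrightarrow> yb" and ZL: "Z \<longlonglongrightarrow> zb"
  shows "(\<lambda>k. yplus a (Y k) (Z k)) \<longlonglongrightarrow> yplus a yb zb"
  unfolding yplus_def
  by (intro isCont_tendsto_compose[OF proj_isCont] tendsto_intros YL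
        isCont_tendsto_compose[OF F_isCont] xm_tendsto[OF Y yb YL ZL])

end

context sgda begin

lemma EB:
  assumes sc: "strict_complementarity F gF" and a: "a > 0" and eps: "\<epsilon> > 0"
  shows "\<exists>C>0. \<forall>y z. y \<in> prob_simplex \<longrightarrow> norm z \<le> Rb \<longrightarrow>
     (norm (uu a y z))\<^sup>2 \<le> \<epsilon> * (norm (z - xm y z))\<^sup>2 + C * (norm (y - yplus a y z))\<^sup>2"
proof (rule ccontr)
  assume neg: "\<not> ?thesis"
  define P where "P k y z \<longleftrightarrow> y \<in> prob_simplex \<and> norm z \<le> Rb \<and>
     (norm (uu a y z))\<^sup>2 > \<epsilon> * (norm (z - xm y z))\<^sup>2 + (real k + 1) * (norm (y - yplus a y z))\<^sup>2" for k y z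
  have "\<forall>k. \<exists>y z. P k y z"
  proof
    fix k :: nat
    have "real k + 1 > 0" by simp
    then show "\<exists>y z. P k y z" using neg unfolding P_def by (meson not_le)
  qed
  then obtain Y where "\<forall>k. \<exists>z. P k (Y k) z" by (metis choice)
  then obtain Z where PYZ: "\<And>k. P k (Y k) (Z k)" by (metis choice)
  have Ys: "Y k \<in> prob_simplex" for k using PYZ[of k] by (simp add: P_def)
  have Zb: "norm (Z k) \<le> Rb" for k using PYZ[of k] by (simp add: P_def)
  define C2 where "C2 = 1 / a + L * L / mu"
  define Yp where "Yp k = yplus a (Y k) (Z k)" for k
  define Yst where "Yst k = ystar (Z k)" for k
  define W where "W k = Yp k - Yst k" for k
  define U where "U k = uu a (Y k) (Z k)" for k
  define e where "e k = norm (Y k - Yp k)" for k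
  define V where "V k = (1 / norm (W k)) *\<^sub>R W k" for k
  define Xp where "Xp k = xm (Yp k) (Z k)" for k
  define \<rho> where "\<rho> k = norm (U k) / norm (W k)" for k
  have Yps: "Yp k \<in> prob_simplex" for k by (simp add: Yp_def yplus_simplex)
  have Ysts: "Yst k \<in> prob_simplex" for k by (simp add: Yst_def ystar_simplex)
  have f1: "(norm (U k))\<^sup>2 > \<epsilon> * (norm (Z k - xm (Y k) (Z k)))\<^sup>2 + (real k + 1) * (e k)\<^sup>2" for k
    using PYZ[of k] by (simp add: P_def U_def e_def Yp_def)
  have f2: "mu * (norm (U k))\<^sup>2 \<le> C2 * e k * norm (W k)" for k
    using eb_basic[OF a Ys, of k "Z k"] by (simp add: U_def C2_def e_def W_def Yp_def Yst_def)
  have U_eq: "U k = xm (Yp k) (Z k) - xm (Yst k) (Z k)" for k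
    by (simp add: U_def uu_def Yp_def Yst_def xs_def)
  have f3: "norm (U k) \<le> L / mu * norm (W k)" for k
    unfolding U_eq W_def by (rule xm_lip_y[OF Yps Ysts])
  have f4: "norm (W k) \<le> 2" for k unfolding W_def by (rule simplex_dist[OF Yps Ysts])
  have f5: "norm (U k) > 0" for k
  proof -
    have "0 \<le> \<epsilon> * (norm (Z k - xm (Y k) (Z k)))\<^sup>2 + (real k + 1) * (e k)\<^sup>2"
      using eps by (intro add_nonneg_nonneg mult_nonneg_nonneg) auto
    then have "(norm (U k))\<^sup>2 > 0" using f1[of k] by linarith
    then show ?thesis by simp
  qed
  have f6: "norm (W k) > 0" for k
  proof -
    have "0 < L / mu * norm (W k)" using f3[of k] f5[of k] by linarith
    then show ?thesis using L_pos mu_pos by (auto simp: zero_less_divide_iff zero_less_mult_iff)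
  qed
  have f7: "norm (\<Sum>i\<in>UNIV. W k $ i *\<^sub>R gF i (Xp k)) \<le> (p + L) * norm (U k)" for k
    using J_bound[OF Yps[of k] Ysts[of k], where z="Z k"]
    by (simp add: gradx_f_diff W_def Xp_def U_eq)
  have e_nonneg: "0 \<le> e k" for k by (simp add: e_def)
  have f8: "(real k + 1) * (e k)\<^sup>2 \<le> (norm (U k))\<^sup>2" for k
  proof -
    have "0 \<le> \<epsilon> * (norm (Z k - xm (Y k) (Z k)))\<^sup>2" using eps by simp
    then show ?thesis using f1[of k] by linarith
  qed
  have rho_sq: "(\<rho> k)\<^sup>2 \<le> (C2 / mu)\<^sup>2 / (real k + 1)" for k
    unfolding \<rho>_def by (rule ratio_aux[OF f5 f6 mu_pos e_nonneg _ f8 f2]) simp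
  have rho_nonneg: "0 \<le> \<rho> k" for k by (simp add: \<rho>_def)
  have rho0: "\<rho> \<longlonglongrightarrow> 0"
  proof -
    have lim1: "(\<lambda>k. (C2 / mu)\<^sup>2 * inverse (real (Suc k))) \<longlonglongrightarrow> 0"
      by (rule tendsto_mult_right_zero[OF LIMSEQ_inverse_real_of_nat])
    have nb: "norm ((\<rho> k)\<^sup>2) \<le> (C2 / mu)\<^sup>2 * inverse (real (Suc k))" for k
    proof -
      have "norm ((\<rho> k)\<^sup>2) = (\<rho> k)\<^sup>2" by simp
      also have "\<dots> \<le> (C2 / mu)\<^sup>2 / (real k + 1)" by (rule rho_sq)
      also have "(C2 / mu)\<^sup>2 / (real k + 1) = (C2 / mu)\<^sup>2 * inverse (real (Suc k))"
        by (simp only: divide_inverse of_nat_Suc add.commute)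
      finally show ?thesis .
    qed
    have "(\<lambda>k. (\<rho> k)\<^sup>2) \<longlonglongrightarrow> 0"
      by (rule Lim_null_comparison[OF always_eventually[OF allI[OF nb]] lim1])
    then have "(\<lambda>k. sqrt ((\<rho> k)\<^sup>2)) \<longlonglongrightarrow> sqrt 0" by (rule tendsto_real_sqrt)
    moreover have "sqrt ((\<rho> k)\<^sup>2) = \<rho> k" for k using rho_nonneg[of k] by simp
    ultimately show ?thesis by simp
  qed
  have U0: "(\<lambda>k. norm (U k)) \<longlonglongrightarrow> 0"
  proof (rule Lim_null_comparison[where g = "\<lambda>k. 2 * \<rho> k"])
    show "\<forall>\<^sub>F k in sequentially. norm (norm (U k)) \<le> 2 * \<rho> k"
    proof (intro always_eventually allI)
      fix k
      have "norm (U k) = \<rho> k * norm (W k)" using f6[of k] by (simp add: \<rho>_def)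
      also have "\<dots> \<le> \<rho> k * 2" using f4[of k] rho_nonneg[of k] by (intro mult_left_mono) auto
      finally show "norm (norm (U k)) \<le> 2 * \<rho> k" by simp
    qed
    show "(\<lambda>k. 2 * \<rho> k) \<longlonglongrightarrow> 0" using tendsto_mult_right_zero[OF rho0, of 2] by simp
  qed
  have e0: "e \<longlonglongrightarrow> 0"
  proof (rule Lim_null_comparison[OF always_eventually U0])
    show "\<forall>k. norm (e k) \<le> norm (U k)"
    proof
      fix k
      have "(e k)\<^sup>2 \<le> (real k + 1) * (e k)\<^sup>2" by (simp add: mult_le_cancel_right1)
      then have "(e k)\<^sup>2 \<le> (norm (U k))\<^sup>2" using f8[of k] by linarith
      then show "norm (e k) \<le> norm (U k)" using e_nonneg[of k] by (simp add: abs_le_square_iff)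
    qed
  qed
  have D0: "(\<lambda>k. norm (Z k - xm (Y k) (Z k))) \<longlonglongrightarrow> 0"
  proof -
    have "(\<lambda>k. (norm (Z k - xm (Y k) (Z k)))\<^sup>2) \<longlonglongrightarrow> 0"
    proof (rule Lim_null_comparison[where g = "\<lambda>k. (norm (U k))\<^sup>2 / \<epsilon>"])
      show "\<forall>\<^sub>F k in sequentially. norm ((norm (Z k - xm (Y k) (Z k)))\<^sup>2) \<le> (norm (U k))\<^sup>2 / \<epsilon>"
      proof (intro always_eventually allI)
        fix k
        have "0 \<le> (real k + 1) * (e k)\<^sup>2" by simp
        then have "\<epsilon> * (norm (Z k - xm (Y k) (Z k)))\<^sup>2 \<le> (norm (U k))\<^sup>2" using f1[of k] by linarith
        then show "norm ((norm (Z k - xm (Y k) (Z k)))\<^sup>2) \<le> (norm (U k))\<^sup>2 / \<epsilon>"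
          using eps by (simp add: field_simps)
      qed
      have "(\<lambda>k. (norm (U k))\<^sup>2 / \<epsilon>) \<longlonglongrightarrow> 0\<^sup>2 / \<epsilon>" by (intro tendsto_intros U0) (use eps in simp)
      then show "(\<lambda>k. (norm (U k))\<^sup>2 / \<epsilon>) \<longlonglongrightarrow> 0" by simp
    qed
    then have "(\<lambda>k. sqrt ((norm (Z k - xm (Y k) (Z k)))\<^sup>2)) \<longlonglongrightarrow> sqrt 0" by (rule tendsto_real_sqrt)
    then show ?thesis by simp
  qed
  define G where "G k = (\<Sum>i\<in>UNIV. V k $ i *\<^sub>R gF i (Xp k))" for k
  have G_bound: "norm (G k) \<le> (p + L) * \<rho> k" for k
  proof -
    have "G k = (1 / norm (W k)) *\<^sub>R (\<Sum>i\<in>UNIV. W k $ i *\<^sub>R gF i (Xp k))"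
      by (simp add: G_def V_def scaleR_sum_right)
    then have "norm (G k) = norm (\<Sum>i\<in>UNIV. W k $ i *\<^sub>R gF i (Xp k)) / norm (W k)"
      by simp
    also have "\<dots> \<le> (p + L) * norm (U k) / norm (W k)"
      using f7[of k] f6[of k] by (intro divide_right_mono) auto
    finally show ?thesis by (simp add: \<rho>_def)
  qed
  have G0: "G \<longlonglongrightarrow> 0"
  proof (rule Lim_null_comparison[OF always_eventually])
    show "\<forall>k. norm (G k) \<le> (p + L) * \<rho> k" using G_bound by blast
    show "(\<lambda>k. (p + L) * \<rho> k) \<longlonglongrightarrow> 0" using tendsto_mult_right_zero[OF rho0] by simp
  qed
  have Vs: "V k \<in> sphere 0 1" for k using f6[of k] by (simp add: V_def)
  have Vsum: "(\<Sum>i\<in>UNIV. V k $ i) = 0" for k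
  proof -
    have "(\<Sum>i\<in>UNIV. W k $ i) = 0"
      using Yps[of k] Ysts[of k] by (simp add: W_def sum_subtractf simplex_mem)
    then show ?thesis by (simp add: V_def sum_divide_distrib[symmetric])
  qed
  have cpt: "compact (prob_simplex \<times> (cball (0::real^'n) Rb \<times> sphere (0::real^'m) 1))"
    by (intro compact_Times simplex_compact compact_cball compact_sphere)
  have mem: "\<forall>k. (Y k, Z k, V k) \<in> prob_simplex \<times> (cball 0 Rb \<times> sphere 0 1)"
  proof
    fix k show "(Y k, Z k, V k) \<in> prob_simplex \<times> (cball 0 Rb \<times> sphere 0 1)"
      using Ys[of k] Zb[of k] Vs[of k] by simp
  qed
  have "\<exists>l\<in>prob_simplex \<times> (cball 0 Rb \<times> sphere 0 1). \<exists>r. strict_mono r \<and> ((\<lambda>k. (Y k, Z k, V k)) \<circ> r) \<longlonglongrightarrow> l"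
  proof -
    have sq: "seq_compact (prob_simplex \<times> (cball (0::real^'n) Rb \<times> sphere (0::real^'m) 1))"
      by (rule compact_imp_seq_compact[OF cpt])
    show ?thesis by (rule mp[OF sq[unfolded seq_compact_def, THEN spec[where x="\<lambda>k. (Y k, Z k, V k)"]] mem])
  qed
  then obtain l r where l: "l \<in> prob_simplex \<times> (cball 0 Rb \<times> sphere 0 1)" and r: "strict_mono r"
    and lim: "((\<lambda>k. (Y k, Z k, V k)) \<circ> r) \<longlonglongrightarrow> l" by blast
  obtain yb zb vb where lyzv: "l = (yb, zb, vb)" by (cases l) auto
  have yb: "yb \<in> prob_simplex" and vb1: "norm vb = 1" using l lyzv by auto
  have YL: "(\<lambda>k. Y (r k)) \<longlonglongrightarrow> yb" using tendsto_fst[OF lim] lyzv by (simp add: comp_def)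
  have ZL: "(\<lambda>k. Z (r k)) \<longlonglongrightarrow> zb" using tendsto_fst[OF tendsto_snd[OF lim]] lyzv by (simp add: comp_def)
  have VL: "(\<lambda>k. V (r k)) \<longlonglongrightarrow> vb" using tendsto_snd[OF tendsto_snd[OF lim]] lyzv by (simp add: comp_def)
  have sub0: "(\<lambda>k. f (r k)) \<longlonglongrightarrow> 0" if "f \<longlonglongrightarrow> 0" for f :: "nat \<Rightarrow> 'z::real_normed_vector"
    using LIMSEQ_subseq_LIMSEQ[OF that r] by (simp add: comp_def)
  have XL: "(\<lambda>k. xm (Y (r k)) (Z (r k))) \<longlonglongrightarrow> xm yb zb"
    by (rule xm_tendsto[OF _ yb YL ZL]) (rule Ys)
  have "(\<lambda>k. Z (r k) - xm (Y (r k)) (Z (r k))) \<longlonglongrightarrow> zb - xm yb zb"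
    by (intro tendsto_intros ZL XL)
  moreover have "(\<lambda>k. Z (r k) - xm (Y (r k)) (Z (r k))) \<longlonglongrightarrow> 0"
    by (rule tendsto_norm_zero_cancel) (rule sub0[OF D0])
  ultimately have "zb - xm yb zb = 0" by (rule LIMSEQ_unique)
  then have zb_fix: "xm yb zb = zb" by simp
  have YpL: "(\<lambda>k. Yp (r k)) \<longlonglongrightarrow> yplus a yb zb"
    unfolding Yp_def by (rule yplus_tendsto[OF _ yb YL ZL]) (rule Ys)
  have "(\<lambda>k. Y (r k) - Yp (r k)) \<longlonglongrightarrow> yb - yplus a yb zb"
    by (intro tendsto_intros YL YpL)
  moreover have "(\<lambda>k. Y (r k) - Yp (r k)) \<longlonglongrightarrow> 0"
    by (rule tendsto_norm_zero_cancel) (use sub0[OF e0] in \<open>simp add: e_def\<close>)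
  ultimately have "yb - yplus a yb zb = 0" by (rule LIMSEQ_unique)
  then have yb_fix: "yplus a yb zb = yb" by simp
  have YpL': "(\<lambda>k. Yp (r k)) \<longlonglongrightarrow> yb" using YpL yb_fix by simp
  have XpL: "(\<lambda>k. Xp (r k)) \<longlonglongrightarrow> zb"
    using xm_tendsto[OF _ yb YpL' ZL] Yps zb_fix by (simp add: Xp_def)
  have xsL: "(\<lambda>k. xs (Z (r k))) \<longlonglongrightarrow> zb"
  proof -
    have "xs (Z k) = Xp k - U k" for k by (simp add: Xp_def U_eq xs_def Yst_def)
    moreover have "(\<lambda>k. Xp (r k) - U (r k)) \<longlonglongrightarrow> zb - 0"
      by (rule tendsto_diff[OF XpL tendsto_norm_zero_cancel[OF sub0[OF U0]]])
    ultimately show ?thesis by simp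
  qed
  define \<mu>0 where "\<mu>0 = psi F zb"
  define \<nu> where "\<nu> = (\<chi> i. \<mu>0 - F zb $ i)"
  have grad0: "gradx_f gF zb yb = 0"
    using xm_grad[OF yb, of zb] zb_fix by (simp add: gradx_K_def)
  have supp: "F zb $ j \<le> F zb $ i" if "yb $ i > 0" for i j
  proof -
    have "proj_simplex (yb + a *\<^sub>R F zb) = yb" using yb_fix zb_fix by (simp add: yplus_def)
    then have "((yb + a *\<^sub>R F zb) - yb) $ j \<le> ((yb + a *\<^sub>R F zb) - yb) $ i"
      using proj_support[of "yb + a *\<^sub>R F zb" i j] that by simp
    then show ?thesis using a by simp
  qed
  have mu0_ge: "F zb $ i \<le> \<mu>0" for i by (simp add: \<mu>0_def psi_def Max_ge)
  obtain imax where imax: "\<mu>0 = F zb $ imax" using Max_attained by (metis \<mu>0_def psi_def)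
  have kkt: "KKT F gF zb yb \<mu>0 \<nu>"
    unfolding KKT_def
  proof (intro conjI allI)
    show "(\<Sum>i\<in>UNIV. yb $ i *\<^sub>R gF i zb) = 0" using grad0 by (simp add: gradx_f_def)
    show "(\<Sum>i\<in>UNIV. yb $ i) = 1" using yb by (simp add: simplex_mem)
    fix i
    show "0 \<le> yb $ i" using yb by (simp add: simplex_mem)
    show "\<mu>0 - \<nu> $ i = F zb $ i" by (simp add: \<nu>_def)
    show "0 \<le> \<nu> $ i" using mu0_ge[of i] by (simp add: \<nu>_def)
    show "\<nu> $ i * yb $ i = 0"
    proof (cases "yb $ i > 0")
      case True
      then have "\<mu>0 \<le> F zb $ i" using supp[OF True, of imax] imax by simp
      then show ?thesis using mu0_ge[of i] by (simp add: \<nu>_def)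
    next
      case False
      then show ?thesis using yb by (simp add: simplex_mem) (metis order.antisym not_less)
    qed
  qed
  have vsupp: "vb $ i = 0" if nu_i: "\<nu> $ i \<noteq> 0" for i
  proof -
    have lt: "F zb $ i < F zb $ imax" using nu_i mu0_ge[of i] imax by (simp add: \<nu>_def)
    define q where "q k = (Y k + a *\<^sub>R F (xm (Y k) (Z k))) - Yp k" for k
    have qL: "(\<lambda>k. q (r k)) \<longlonglongrightarrow> (yb + a *\<^sub>R F zb) - yb"
      unfolding q_def using zb_fix
      by (intro tendsto_intros YL YpL' isCont_tendsto_compose[OF F_isCont]) (use XL in simp)
    have "(\<lambda>k. q (r k) $ i - q (r k) $ imax) \<longlonglongrightarrow> ((yb + a *\<^sub>R F zb) - yb) $ i - ((yb + a *\<^sub>R F zb) - yb) $ imax"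
      by (intro tendsto_intros qL)
    moreover have "((yb + a *\<^sub>R F zb) - yb) $ i - ((yb + a *\<^sub>R F zb) - yb) $ imax < 0"
      using lt a by simp
    ultimately have ev1: "\<forall>\<^sub>F k in sequentially. q (r k) $ i - q (r k) $ imax < 0"
      by (rule order_tendstoD(2))
    have ev1': "\<forall>\<^sub>F k in sequentially. Yp (r k) $ i = 0"
    proof (rule eventually_mono[OF ev1])
      fix k assume "q (r k) $ i - q (r k) $ imax < 0"
      moreover have "\<not> Yp (r k) $ i > 0 \<or> q (r k) $ imax \<le> q (r k) $ i"
        using proj_support[of "Y (r k) + a *\<^sub>R F (xm (Y (r k)) (Z (r k)))" i imax]
        by (auto simp: q_def Yp_def yplus_def)
      ultimately have "\<not> Yp (r k) $ i > 0" by linarith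
      then show "Yp (r k) $ i = 0" using Yps[of "r k"] by (simp add: simplex_mem) (metis order.antisym not_less)
    qed
    have gL: "(\<lambda>k. F (xs (Z (r k))) $ i - F (xs (Z (r k))) $ imax) \<longlonglongrightarrow> F zb $ i - F zb $ imax"
      by (intro tendsto_intros isCont_tendsto_compose[OF F_isCont] xsL)
    then have ev2: "\<forall>\<^sub>F k in sequentially. F (xs (Z (r k))) $ i - F (xs (Z (r k))) $ imax < 0"
      by (rule order_tendstoD(2)) (use lt in simp)
    have ev2': "\<forall>\<^sub>F k in sequentially. Yst (r k) $ i = 0"
    proof (rule eventually_mono[OF ev2])
      fix k assume A: "F (xs (Z (r k))) $ i - F (xs (Z (r k))) $ imax < 0"
      have dopt: "dualopt (Z (r k)) (Yst (r k))" by (simp add: Yst_def ystar)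
      have "\<not> Yst (r k) $ i > 0"
      proof
        assume "Yst (r k) $ i > 0"
        then have "F (xm (Yst (r k)) (Z (r k))) $ imax \<le> F (xm (Yst (r k)) (Z (r k))) $ i"
          using dopt by (intro vi_support[of "Yst (r k)"]) (auto simp: dualopt_def)
        then show False using A by (simp add: xs_def Yst_def)
      qed
      then show "Yst (r k) $ i = 0" using Ysts[of "r k"] by (simp add: simplex_mem) (metis order.antisym not_less)
    qed
    have "\<forall>\<^sub>F k in sequentially. 0 = V (r k) $ i"
      using eventually_conj[OF ev1' ev2'] by (rule eventually_mono) (simp add: V_def W_def)
    then have "(\<lambda>k. V (r k) $ i) \<longlonglongrightarrow> 0" by (rule Lim_transform_eventually[OF tendsto_const])
    moreover have "(\<lambda>k. V (r k) $ i) \<longlonglongrightarrow> vb $ i" by (intro tendsto_intros VL)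
    ultimately show ?thesis using LIMSEQ_unique by metis
  qed
  have vsum: "(\<Sum>i\<in>UNIV. vb $ i) = 0"
  proof -
    have "(\<lambda>k. \<Sum>i\<in>UNIV. V (r k) $ i) \<longlonglongrightarrow> (\<Sum>i\<in>UNIV. vb $ i)" by (intro tendsto_intros VL)
    then show ?thesis using Vsum by (simp add: LIMSEQ_const_iff)
  qed
  have vker: "(\<Sum>i\<in>UNIV. vb $ i *\<^sub>R gF i zb) = 0"
  proof -
    have "(\<lambda>k. G (r k)) \<longlonglongrightarrow> (\<Sum>i\<in>UNIV. vb $ i *\<^sub>R gF i zb)"
      unfolding G_def by (intro tendsto_intros VL isCont_tendsto_compose[OF gF_isCont] XpL)
    moreover have "(\<lambda>k. G (r k)) \<longlonglongrightarrow> 0" by (rule sub0[OF G0])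
    ultimately show ?thesis using LIMSEQ_unique by metis
  qed
  have vb0: "vb \<noteq> 0" using vb1 by auto
  show False by (rule sc_contra[OF sc kkt vb0 vsum vsupp vker])
qed

end

lemma amgm: fixes X Y k :: real assumes "0 < k" shows "2 * X * Y \<le> k * X\<^sup>2 + Y\<^sup>2 / k"
proof -
  have "0 \<le> (k*X - Y)\<^sup>2 / k" using assms by simp
  also have "(k*X - Y)\<^sup>2 / k = k * X\<^sup>2 - 2 * X * Y + Y\<^sup>2 / k" using assms by (simp add: power2_eq_square field_simps)
  finally show ?thesis by simp
qed

lemma G2_aux: fixes a b c \<alpha> L \<sigma> :: real
  assumes "0 < c" "0 < \<alpha>" "0 < L" "4 * c * L \<le> 1" "\<alpha> * (4 * L * \<sigma>\<^sup>2) < 1"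
  shows "2 * L * (\<sigma> * a) * b \<le> a\<^sup>2 / c / 8 + b\<^sup>2 / \<alpha> / 2"
proof -
  have k: "0 < 1 / (8 * c)" using assms by simp
  have "2 * L * (\<sigma> * a) * b = 2 * a * (L * \<sigma> * b)" by simp
  also have "\<dots> \<le> 1 / (8 * c) * a\<^sup>2 + (L * \<sigma> * b)\<^sup>2 / (1 / (8 * c))" by (rule amgm[OF k])
  also have "(L * \<sigma> * b)\<^sup>2 / (1 / (8 * c)) = b\<^sup>2 * ((8 * c * L) * (L * \<sigma>\<^sup>2))"
    by (simp add: power2_eq_square)
  also have "b\<^sup>2 * ((8 * c * L) * (L * \<sigma>\<^sup>2)) \<le> b\<^sup>2 * (1 / (2 * \<alpha>))"
  proof (rule mult_left_mono)
    have "L * \<sigma>\<^sup>2 \<le> 1 / (4 * \<alpha>)" using assms by (simp add: field_simps)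
    then have "(8 * c * L) * (L * \<sigma>\<^sup>2) \<le> (8 * c * L) * (1 / (4 * \<alpha>))"
      using assms by (intro mult_left_mono) auto
    also have "\<dots> = (2 * c * L) / \<alpha>" by simp
    also have "\<dots> \<le> (1 / 2) / \<alpha>" using assms by (intro divide_right_mono) auto
    finally show "(8 * c * L) * (L * \<sigma>\<^sup>2) \<le> 1 / (2 * \<alpha>)" by simp
  qed simp
  finally show ?thesis by simp
qed

lemma G3_aux: fixes p s \<beta> :: real assumes "0 < \<beta>" "\<beta> \<le> 1 / 36" "0 < p"
  shows "p * s\<^sup>2 / 2 \<le> p * s\<^sup>2 / \<beta> / 72"
proof -
  have "1 / 2 \<le> 1 / \<beta> / 72" using assms by (simp add: field_simps)
  then have "p * s\<^sup>2 * (1 / 2) \<le> p * s\<^sup>2 * (1 / \<beta> / 72)" using assms by (intro mult_left_mono) auto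
  then show ?thesis by simp
qed

lemma G5_aux: fixes p s \<beta> mu :: real assumes "0 < \<beta>" "\<beta> \<le> mu / (8 * p)" "0 < p" "0 < mu"
  shows "2 * p * (p / mu * s) * s \<le> p * s\<^sup>2 / \<beta> / 4"
proof -
  have "2 * p / mu \<le> 1 / \<beta> / 4" using assms by (simp add: field_simps)
  then have "p * s\<^sup>2 * (2 * p / mu) \<le> p * s\<^sup>2 * (1 / \<beta> / 4)" using assms by (intro mult_left_mono) auto
  then show ?thesis by (simp add: power2_eq_square mult_ac)
qed

lemma G6_aux: fixes p s \<beta> M a c :: real assumes "0 < \<beta>" "\<beta> * (128 * c * p * M\<^sup>2) \<le> 1" "0 < p" "0 < c"
  shows "2 * p * (M * a) * s \<le> p * s\<^sup>2 / \<beta> / 8 + a\<^sup>2 / c / 16"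
proof -
  have k: "0 < 8 * \<beta>" using assms by simp
  have "2 * (M * a) * s \<le> 8 * \<beta> * (M * a)\<^sup>2 + s\<^sup>2 / (8 * \<beta>)" by (rule amgm[OF k])
  then have "p * (2 * (M * a) * s) \<le> p * (8 * \<beta> * (M * a)\<^sup>2 + s\<^sup>2 / (8 * \<beta>))" using assms by (intro mult_left_mono) auto
  also have "\<dots> = a\<^sup>2 * (8 * p * \<beta> * M\<^sup>2) + p * s\<^sup>2 / \<beta> / 8" by (simp add: power2_eq_square algebra_simps)
  also have "a\<^sup>2 * (8 * p * \<beta> * M\<^sup>2) \<le> a\<^sup>2 * (1 / (16 * c))"
  proof (rule mult_left_mono)
    show "8 * p * \<beta> * M\<^sup>2 \<le> 1 / (16 * c)" using assms by (simp add: field_simps)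
  qed simp
  finally show ?thesis by (simp add: algebra_simps)
qed

lemma G7_aux: fixes p s \<beta> U :: real assumes "0 < \<beta>" "0 < p"
  shows "2 * p * U * s \<le> p * s\<^sup>2 / \<beta> / 8 + 8 * p * \<beta> * U\<^sup>2"
proof -
  have k: "0 < 8 * \<beta>" using assms by simp
  have "2 * U * s \<le> 8 * \<beta> * U\<^sup>2 + s\<^sup>2 / (8 * \<beta>)" by (rule amgm[OF k])
  then have "p * (2 * U * s) \<le> p * (8 * \<beta> * U\<^sup>2 + s\<^sup>2 / (8 * \<beta>))" using assms by (intro mult_left_mono) auto
  then show ?thesis by (simp add: algebra_simps)
qed

lemma sq_sum2: fixes X Y :: real shows "(X + Y)\<^sup>2 \<le> 2 * X\<^sup>2 + 2 * Y\<^sup>2"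
  by (smt (verit, best) power2_sum sum_squares_bound)

lemma G8_aux: fixes p s \<beta> U D C e a c \<alpha> \<sigma> :: real
  assumes "0 < \<beta>" "0 < p" "0 < c" "0 < \<alpha>" "0 \<le> C"
    and U: "U\<^sup>2 \<le> 1 / 128 * D\<^sup>2 + C * e\<^sup>2" and D0: "0 \<le> D" and D: "D \<le> s / \<beta> + \<sigma> * a"
    and b1: "\<beta> * (2 * c * p * \<sigma>\<^sup>2) \<le> 1" and b2: "\<beta> * (128 * p * \<alpha> * C) \<le> 1"
  shows "8 * p * \<beta> * U\<^sup>2 \<le> p * s\<^sup>2 / \<beta> / 8 + a\<^sup>2 / c / 16 + e\<^sup>2 / \<alpha> / 16"
proof -
  have pb: "0 < 8 * p * \<beta>" using assms by simp
  have "D\<^sup>2 \<le> (s / \<beta> + \<sigma> * a)\<^sup>2" by (rule power_mono[OF D D0])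
  also have "\<dots> \<le> 2 * (s / \<beta>)\<^sup>2 + 2 * (\<sigma> * a)\<^sup>2" by (rule sq_sum2)
  finally have D2: "D\<^sup>2 \<le> 2 * (s / \<beta>)\<^sup>2 + 2 * (\<sigma> * a)\<^sup>2" .
  have "8 * p * \<beta> * U\<^sup>2 \<le> 8 * p * \<beta> * (1 / 128 * D\<^sup>2 + C * e\<^sup>2)"
    using pb U by (intro mult_left_mono) auto
  also have "\<dots> = p * \<beta> * D\<^sup>2 / 16 + e\<^sup>2 * (8 * p * \<beta> * C)" by (simp add: algebra_simps)
  also have "p * \<beta> * D\<^sup>2 / 16 \<le> p * \<beta> * (2 * (s / \<beta>)\<^sup>2 + 2 * (\<sigma> * a)\<^sup>2) / 16"
    using D2 assms by (intro divide_right_mono mult_left_mono) auto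
  also have "p * \<beta> * (2 * (s / \<beta>)\<^sup>2 + 2 * (\<sigma> * a)\<^sup>2) / 16 = p * s\<^sup>2 / \<beta> / 8 + a\<^sup>2 * (p * \<beta> * \<sigma>\<^sup>2 / 8)"
    using assms by (simp add: power2_eq_square field_simps)
  also have "a\<^sup>2 * (p * \<beta> * \<sigma>\<^sup>2 / 8) \<le> a\<^sup>2 * (1 / (16 * c))"
  proof (rule mult_left_mono)
    show "p * \<beta> * \<sigma>\<^sup>2 / 8 \<le> 1 / (16 * c)" using b1 assms by (simp add: field_simps)
  qed simp
  also have "e\<^sup>2 * (8 * p * \<beta> * C) \<le> e\<^sup>2 * (1 / (16 * \<alpha>))"
  proof (rule mult_left_mono)
    show "8 * p * \<beta> * C \<le> 1 / (16 * \<alpha>)" using b2 assms by (simp add: field_simps)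
  qed simp
  finally show ?thesis by simp
qed

lemma G9_aux: fixes e b a c \<alpha> L \<sigma> :: real
  assumes "0 \<le> e" "e \<le> b + \<alpha> * L * \<sigma> * a" "0 < c" "0 < \<alpha>" "0 < L" "4 * c * L \<le> 1" "\<alpha> * (4 * L * \<sigma>\<^sup>2) < 1"
  shows "e\<^sup>2 / \<alpha> \<le> 2 * (b\<^sup>2 / \<alpha>) + a\<^sup>2 / c / 8"
proof -
  have "e\<^sup>2 \<le> (b + \<alpha> * L * \<sigma> * a)\<^sup>2" using assms by (intro power_mono) auto
  also have "\<dots> \<le> 2 * b\<^sup>2 + 2 * (\<alpha> * L * \<sigma> * a)\<^sup>2" by (rule sq_sum2)
  finally have "e\<^sup>2 / \<alpha> \<le> (2 * b\<^sup>2 + 2 * (\<alpha> * L * \<sigma> * a)\<^sup>2) / \<alpha>" using assms by (intro divide_right_mono) auto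
  also have "\<dots> = 2 * (b\<^sup>2 / \<alpha>) + a\<^sup>2 * (2 * (c * L) * (\<alpha> * L * \<sigma>\<^sup>2) / c)"
    using assms by (simp add: power2_eq_square field_simps)
  also have "a\<^sup>2 * (2 * (c * L) * (\<alpha> * L * \<sigma>\<^sup>2) / c) \<le> a\<^sup>2 * (1 / (8 * c))"
  proof (rule mult_left_mono)
    have "c * L \<le> 1 / 4" using assms by simp
    moreover have "\<alpha> * L * \<sigma>\<^sup>2 \<le> 1 / 4" using assms by (simp add: algebra_simps)
    moreover have "0 \<le> \<alpha> * L * \<sigma>\<^sup>2" using assms by simp
    ultimately have "(c * L) * (\<alpha> * L * \<sigma>\<^sup>2) \<le> (1 / 4) * (1 / 4)"
      using assms by (intro mult_mono) auto
    then show "2 * (c * L) * (\<alpha> * L * \<sigma>\<^sup>2) / c \<le> 1 / (8 * c)" using assms by (simp add: field_simps)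
  qed simp
  finally show ?thesis by simp
qed


lemma G1_aux: fixes L mu b \<alpha> :: real
  assumes "0 < L" "2 * L \<le> mu" "0 < \<alpha>" "\<alpha> * (11 * L) < 1"
  shows "2 * L * (L / mu * b) * b \<le> b\<^sup>2 / \<alpha> / 11"
proof -
  have mu: "mu > 0" using assms by linarith
  have e1: "2 * L * (L / mu * b) * b = b\<^sup>2 * (2 * L / mu * L)" by (simp add: power2_eq_square)
  have "2 * L / mu \<le> 1" using mu assms by simp
  then have "2 * L / mu * L \<le> 1 * L" using assms by (intro mult_right_mono) auto
  also have "L \<le> 1 / (11 * \<alpha>)" using assms by (simp add: field_simps)
  finally have "b\<^sup>2 * (2 * L / mu * L) \<le> b\<^sup>2 * (1 / (11 * \<alpha>))" by (intro mult_left_mono) auto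
  moreover have "b\<^sup>2 * (1 / (11 * \<alpha>)) = b\<^sup>2 / \<alpha> / 11" by simp
  ultimately show ?thesis using e1 by linarith
qed

lemma final_comb: fixes A B S E T I R Yx Yy Yd W w1 w2 r1 r2 r3 V Zs Phi p :: real
  assumes "A / 2 - Yx + 2 * Yy + Zs \<le> Phi" "Zs = S - T / 2 - 2 * p * I" "2 * p * I \<le> R"
    "B \<le> Yx" "- W \<le> Yd" "- Yx + 2 * Yy = Yx + 2 * Yd" "2 * W = w1 + w2"
    "w1 \<le> B / 11" "w2 \<le> A / 8 + B / 2" "T / 2 \<le> S / 72" "R \<le> r1 + r2 + r3"
    "r1 \<le> S / 4" "r2 \<le> S / 8 + A / 16" "r3 \<le> S / 8 + V" "V \<le> S / 8 + A / 16 + E / 16"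
    "E \<le> 2 * B + A / 8" "0 \<le> A" "0 \<le> B" "0 \<le> S"
  shows "A / 16 + E / 16 + S / 16 \<le> Phi"
  using assms by linarith

lemma sq_shift: "(norm (w - z'))\<^sup>2 - (norm (w - z))\<^sup>2 = -2 * inner (w - z) (z' - z) + (norm (z' - z))\<^sup>2"
proof -
  have "w - z' = (w - z) - (z' - z)" by simp
  then have "(norm (w - z'))\<^sup>2 = (norm (w - z))\<^sup>2 - 2 * inner (w - z) (z' - z) + (norm (z' - z))\<^sup>2"
    by (simp only: power2_norm_eq_inner inner_diff_left inner_diff_right) (simp add: inner_commute)
  then show ?thesis by simp
qed

context sgda begin

lemma step:
  fixes x z x' z' :: "real^'n" and y y' :: "real^'m"
  assumes c: "0 < c" "c * (p + L) < 1"
    and al: "0 < \<alpha>" "\<alpha> * (11 * L) < 1" "\<alpha> * (4 * L * (1 + 1 / (c * mu))\<^sup>2) < 1"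
    and be: "0 < \<beta>" "\<beta> \<le> 1 / 36" "\<beta> \<le> mu / (8 * p)"
       "\<beta> * (128 * c * p * (L / mu * (\<alpha> * L * (1 + 1 / (c * mu))))\<^sup>2) \<le> 1"
       "\<beta> * (2 * c * p * (1 + 1 / (c * mu))\<^sup>2) \<le> 1" "\<beta> * (128 * p * \<alpha> * C) \<le> 1"
    and C: "0 \<le> C"
    and y: "y \<in> prob_simplex"
    and EBi: "(norm (uu \<alpha> y z))\<^sup>2 \<le> 1 / 128 * (norm (z - xm y z))\<^sup>2 + C * (norm (y - yplus \<alpha> y z))\<^sup>2"
    and x': "x' = x - c *\<^sub>R gK x z y"
    and y': "y' = proj_simplex (y + \<alpha> *\<^sub>R F x')"
    and z': "z' = z + \<beta> *\<^sub>R (x' - z)"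
  shows "phi F p x y z - phi F p x' y' z' \<ge>
    1 / (16 * c) * (norm (x - x'))\<^sup>2 + 1 / (16 * \<alpha>) * (norm (y - proj_simplex (y + \<alpha> *\<^sub>R F (xm y z))))\<^sup>2
    + p / (16 * \<beta>) * (norm (z - z'))\<^sup>2"
proof -
  define \<sigma> where "\<sigma> = 1 + 1 / (c * mu)"
  define M where "M = L / mu * (\<alpha> * L * \<sigma>)"
  define g where "g = gK x z y"
  define yp where "yp = yplus \<alpha> y z"
  define x2 where "x2 = xm y' z"
  define xh where "xh = xm y' z'"
  define xst where "xst = xs z"
  define \<delta> where "\<delta> = z' - z"
  define a where "a = norm (x - x')"
  define b where "b = norm (y - y')"
  define s where "s = norm (z - z')"
  define e where "e = norm (y - yp)"
  define U where "U = norm (uu \<alpha> y z)"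
  define D where "D = norm (z - xm y z)"
  define Q where "Q = norm (xh - xst)"
  have mu: "0 < mu" "2 * L \<le> mu" using mu_pos mu_ge by auto
  have cmu: "0 < c * mu" using c mu by simp
  have sig0: "0 \<le> \<sigma>" using cmu by (simp add: \<sigma>_def)
  have y's: "y' \<in> prob_simplex" by (simp add: y' proj_in)
  have yps: "yp \<in> prob_simplex" by (simp add: yp_def yplus_simplex)
  have a_eq: "a = c * norm g" using c by (simp add: a_def x' g_def)
  have s_eq: "s = norm \<delta>" by (simp add: s_def \<delta>_def norm_minus_commute)
  have s_eq2: "s = \<beta> * norm (x' - z)" using be by (simp add: s_eq \<delta>_def z')
  have Fx: "K x' z y \<le> K x z y - a\<^sup>2 / c / 2"
  proof -
    have "K (x + - (c *\<^sub>R g)) z y \<le> K x z y + inner (gK x z y) (- (c *\<^sub>R g)) + (p + L) / 2 * (norm (- (c *\<^sub>R g)))\<^sup>2"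
      by (rule K_upper[OF y])
    moreover have "x + - (c *\<^sub>R g) = x'" by (simp add: x' g_def)
    moreover have "inner (gK x z y) (- (c *\<^sub>R g)) = - (a\<^sup>2 / c)"
      using c by (simp add: g_def a_eq power2_eq_square power2_norm_eq_inner[symmetric])
    moreover have "(norm (- (c *\<^sub>R g)))\<^sup>2 = a\<^sup>2" using c by (simp add: a_eq)
    moreover have "(p + L) / 2 * a\<^sup>2 \<le> a\<^sup>2 / c / 2"
    proof -
      have "p + L \<le> 1 / c" using c by (simp add: field_simps)
      then have "(p + L) * a\<^sup>2 \<le> 1 / c * a\<^sup>2" by (intro mult_right_mono) auto
      then show ?thesis by simp
    qed
    ultimately show ?thesis by simp
  qed
  have xdist: "norm (x - xm y z) \<le> a / (c * mu)"
  proof -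
    have "norm (x - xm y z) \<le> norm g / mu" unfolding g_def by (rule xm_dist[OF y])
    also have "norm g = a / c" using c by (simp add: a_eq)
    finally show ?thesis by simp
  qed
  have x'dist: "norm (x' - xm y z) \<le> \<sigma> * a"
  proof -
    have "norm (x' - xm y z) \<le> norm (x' - x) + norm (x - xm y z)" by (rule norm_diff_triangle_le[OF order_refl order_refl])
    also have "\<dots> \<le> a + a / (c * mu)" using xdist by (simp add: a_def norm_minus_commute)
    also have "\<dots> = \<sigma> * a" by (simp add: \<sigma>_def algebra_simps)
    finally show ?thesis .
  qed
  have ypd: "norm (y' - yp) \<le> \<alpha> * L * \<sigma> * a"
  proof -
    have "norm (y' - yp) \<le> norm ((y + \<alpha> *\<^sub>R F x') - (y + \<alpha> *\<^sub>R F (xm y z)))"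
      unfolding y' yp_def yplus_def by (rule proj_lip)
    also have "\<dots> = \<alpha> * norm (F x' - F (xm y z))" using al by (simp add: scaleR_diff_right[symmetric])
    also have "\<dots> \<le> \<alpha> * (L * norm (x' - xm y z))" using al F_lip by (intro mult_left_mono) auto
    also have "\<dots> \<le> \<alpha> * (L * (\<sigma> * a))" using al L_pos x'dist by (intro mult_left_mono) auto
    finally show ?thesis by (simp add: mult_ac)
  qed
  have e_le: "e \<le> b + \<alpha> * L * \<sigma> * a"
  proof -
    have "e \<le> norm (y - y') + norm (y' - yp)" unfolding e_def by (rule norm_diff_triangle_le[OF order_refl order_refl])
    then show ?thesis using ypd by (simp add: b_def)
  qed
  have x2d: "norm (x2 - x') \<le> L / mu * b + \<sigma> * a"
  proof -
    have "norm (x2 - x') \<le> norm (x2 - xm y z) + norm (xm y z - x')" by (rule norm_diff_triangle_le[OF order_refl order_refl])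
    also have "norm (x2 - xm y z) \<le> L / mu * b" unfolding x2_def b_def
      using xm_lip_y[OF y's y, of z] by (simp add: norm_minus_commute)
    finally show ?thesis using x'dist by (simp add: norm_minus_commute)
  qed
  have Qb: "Q \<le> p / mu * s + M * a + U"
  proof -
    have "Q \<le> norm (xh - xm y' z) + norm (xm y' z - xst)" unfolding Q_def by (rule norm_diff_triangle_le[OF order_refl order_refl])
    also have "norm (xm y' z - xst) \<le> norm (xm y' z - xm yp z) + norm (xm yp z - xst)" by (rule norm_diff_triangle_le[OF order_refl order_refl])
    also have "norm (xh - xm y' z) \<le> p / mu * s" unfolding xh_def
      using xm_lip_z[OF y's, of z' z] by (simp add: s_def norm_minus_commute)
    also have "norm (xm y' z - xm yp z) \<le> L / mu * norm (y' - yp)" by (rule xm_lip_y[OF y's yps])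
    also have "L / mu * norm (y' - yp) \<le> M * a"
    proof -
      have "L / mu * norm (y' - yp) \<le> L / mu * (\<alpha> * L * \<sigma> * a)" using ypd L_pos mu by (intro mult_left_mono) auto
      then show ?thesis by (simp add: M_def mult_ac)
    qed
    also have "norm (xm yp z - xst) = U" by (simp add: U_def uu_def yp_def xst_def)
    finally show ?thesis by simp
  qed
  have Dle: "D \<le> s / \<beta> + \<sigma> * a"
  proof -
    have "D \<le> norm (z - x') + norm (x' - xm y z)" unfolding D_def by (rule norm_diff_triangle_le[OF order_refl order_refl])
    moreover have "norm (z - x') = s / \<beta>" using be by (simp add: s_eq2 norm_minus_commute)
    ultimately show ?thesis using x'dist by simp
  qed
  define dx' where "dx' = (norm (x' - z'))\<^sup>2 - (norm (x' - z))\<^sup>2"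
  define dxh where "dxh = (norm (xh - z'))\<^sup>2 - (norm (xh - z))\<^sup>2"
  define dxs where "dxs = (norm (xst - z'))\<^sup>2 - (norm (xst - z))\<^sup>2"
  have d1: "dfun F p y z \<le> K x2 z y" using dfun_eq[OF y] xm_min[OF y] by simp
  have d2: "dfun F p y' z' = K xh z' y'" by (simp add: dfun_eq[OF y's] xh_def)
  have d3: "K x2 z y' \<le> K xh z y'" unfolding x2_def by (rule xm_min[OF y's])
  have P1: "Pfun F p z = Phi z xst" by (simp add: Pfun_eq xst_def)
  have P2: "Pfun F p z' \<le> Phi z' xst" by (rule Pfun_le)
  have P3: "Phi z' xst - Phi z xst = p / 2 * dxs" by (simp add: Phi_def dxs_def algebra_simps)
  have K1: "K xh z' y' - K xh z y' = p / 2 * dxh" by (simp add: Kfun_def dxh_def algebra_simps)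
  have K2: "K x' z' y' - K x' z y' = p / 2 * dx'" by (simp add: Kfun_def dx'_def algebra_simps)
  have K3: "K x' z y' - K x' z y = inner (F x') (y' - y)" by (rule K_y_diff)
  have K4: "K x2 z y' - K x2 z y = inner (F x2) (y' - y)" by (rule K_y_diff)
  have Main1: "phi F p x y z - phi F p x' y' z' \<ge> a\<^sup>2 / c / 2 - inner (F x') (y' - y) + 2 * inner (F x2) (y' - y)
       + (- (p / 2 * dx') + 2 * (p / 2 * dxh) - 2 * (p / 2 * dxs))"
    unfolding phi_def using Fx d1 d2 d3 P1 P2 P3 K1 K2 K3 K4 by linarith
  define Ih where "Ih = inner (xh - z) \<delta>"
  define Is where "Is = inner (xst - z) \<delta>"
  have e1: "dx' = -2 * (s\<^sup>2 / \<beta>) + s\<^sup>2"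
  proof -
    have "dx' = -2 * inner (x' - z) \<delta> + s\<^sup>2" unfolding dx'_def \<delta>_def s_eq by (rule sq_shift)
    moreover have "inner (x' - z) \<delta> = s\<^sup>2 / \<beta>"
      using be by (simp add: \<delta>_def z' s_eq2 power2_eq_square power2_norm_eq_inner[symmetric])
    ultimately show ?thesis by simp
  qed
  have e2: "dxh = -2 * Ih + s\<^sup>2" unfolding dxh_def Ih_def \<delta>_def s_eq by (rule sq_shift)
  have e3: "dxs = -2 * Is + s\<^sup>2" unfolding dxs_def Is_def \<delta>_def s_eq by (rule sq_shift)
  have Zid: "- (p / 2 * dx') + 2 * (p / 2 * dxh) - 2 * (p / 2 * dxs) = p * s\<^sup>2 / \<beta> - p * s\<^sup>2 / 2 - 2 * p * (Ih - Is)"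
    unfolding e1 e2 e3 by (simp add: algebra_simps)
  have IQ: "Ih - Is \<le> Q * s"
  proof -
    have "Ih - Is = inner (xh - xst) \<delta>" by (simp add: Ih_def Is_def inner_diff_left)
    also have "\<dots> \<le> Q * s" unfolding Q_def s_eq by (rule norm_cauchy_schwarz)
    finally show ?thesis .
  qed
  have IQ2: "2 * p * (Ih - Is) \<le> 2 * p * Q * s"
    using IQ p_pos by (simp add: mult_left_mono mult.assoc)
  have Y1: "inner (F x') (y' - y) \<ge> b\<^sup>2 / \<alpha>"
  proof -
    have "inner ((y + \<alpha> *\<^sub>R F x') - y') (y - y') \<le> 0" unfolding y' by (rule proj_vi[OF y])
    moreover have "inner ((y + \<alpha> *\<^sub>R F x') - y') (y - y') = b\<^sup>2 - \<alpha> * inner (F x') (y' - y)"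
      by (simp add: b_def power2_norm_eq_inner inner_diff_left inner_diff_right inner_add_left algebra_simps)
    ultimately have "b\<^sup>2 \<le> \<alpha> * inner (F x') (y' - y)" by simp
    then show ?thesis using al by (simp add: field_simps)
  qed
  have Y2: "inner (F x2 - F x') (y' - y) \<ge> - (L * (L / mu * b + \<sigma> * a) * b)"
  proof -
    have "- inner (F x2 - F x') (y' - y) = inner (F x2 - F x') (y - y')" by (simp add: inner_diff_right)
    also have "\<dots> \<le> norm (F x2 - F x') * norm (y - y')" by (rule norm_cauchy_schwarz)
    also have "\<dots> \<le> (L * (L / mu * b + \<sigma> * a)) * b"
    proof (unfold b_def[symmetric], rule mult_right_mono)
      have "norm (F x2 - F x') \<le> L * norm (x2 - x')" by (rule F_lip)
      also have "\<dots> \<le> L * (L / mu * b + \<sigma> * a)" using x2d L_pos by (intro mult_left_mono) auto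
      finally show "norm (F x2 - F x') \<le> L * (L / mu * b + \<sigma> * a)" .
    qed (simp add: b_def)
    finally show ?thesis by simp
  qed
  have Yid: "- inner (F x') (y' - y) + 2 * inner (F x2) (y' - y) = inner (F x') (y' - y) + 2 * inner (F x2 - F x') (y' - y)"
    by (simp add: inner_diff_left)
  have Ysplit: "2 * (L * (L / mu * b + \<sigma> * a) * b) = 2 * L * (L / mu * b) * b + 2 * L * (\<sigma> * a) * b"
    by (simp add: algebra_simps)
  have cL: "4 * c * L \<le> 1"
  proof -
    have "4 * L \<le> p + L" using pL by simp
    then have "c * (4 * L) \<le> c * (p + L)" using c by (intro mult_left_mono) auto
    moreover have "4 * c * L = c * (4 * L)" by simp
    ultimately show ?thesis using c by linarith
  qed
  have al3: "\<alpha> * (4 * L * \<sigma>\<^sup>2) < 1" using al by (simp add: \<sigma>_def)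
  have G1: "2 * L * (L / mu * b) * b \<le> b\<^sup>2 / \<alpha> / 11" by (rule G1_aux[OF L_pos mu(2) al(1) al(2)])
  have G2: "2 * L * (\<sigma> * a) * b \<le> a\<^sup>2 / c / 8 + b\<^sup>2 / \<alpha> / 2" by (rule G2_aux[OF c(1) al(1) L_pos cL al3])
  have G3: "p * s\<^sup>2 / 2 \<le> p * s\<^sup>2 / \<beta> / 72" by (rule G3_aux[OF be(1) be(2) p_pos])
  have G4: "2 * p * Q * s \<le> 2 * p * (p / mu * s) * s + 2 * p * (M * a) * s + 2 * p * U * s"
  proof -
    have "2 * p * s * Q \<le> 2 * p * s * (p / mu * s + M * a + U)"
      using Qb p_pos by (intro mult_left_mono) (auto simp: s_def)
    then show ?thesis by (simp add: algebra_simps)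
  qed
  have G5: "2 * p * (p / mu * s) * s \<le> p * s\<^sup>2 / \<beta> / 4" by (rule G5_aux[OF be(1) be(3) p_pos mu(1)])
  have G6: "2 * p * (M * a) * s \<le> p * s\<^sup>2 / \<beta> / 8 + a\<^sup>2 / c / 16"
    by (rule G6_aux[OF be(1) _ p_pos c(1)]) (use be(4) in \<open>simp add: M_def \<sigma>_def\<close>)
  have G7: "2 * p * U * s \<le> p * s\<^sup>2 / \<beta> / 8 + 8 * p * \<beta> * U\<^sup>2" by (rule G7_aux[OF be(1) p_pos])
  have G8: "8 * p * \<beta> * U\<^sup>2 \<le> p * s\<^sup>2 / \<beta> / 8 + a\<^sup>2 / c / 16 + e\<^sup>2 / \<alpha> / 16"
  proof (rule G8_aux[OF be(1) p_pos c(1) al(1) C])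
    show "U\<^sup>2 \<le> 1 / 128 * D\<^sup>2 + C * e\<^sup>2" using EBi by (simp add: U_def D_def e_def yp_def)
    show "0 \<le> D" by (simp add: D_def)
    show "D \<le> s / \<beta> + \<sigma> * a" by (rule Dle)
    show "\<beta> * (2 * c * p * \<sigma>\<^sup>2) \<le> 1" using be(5) by (simp add: \<sigma>_def)
    show "\<beta> * (128 * p * \<alpha> * C) \<le> 1" by (rule be(6))
  qed
  have G9: "e\<^sup>2 / \<alpha> \<le> 2 * (b\<^sup>2 / \<alpha>) + a\<^sup>2 / c / 8"
    by (rule G9_aux[OF _ e_le c(1) al(1) L_pos cL al3]) (simp add: e_def)
  have fin: "phi F p x y z - phi F p x' y' z' \<ge> a\<^sup>2 / c / 16 + e\<^sup>2 / \<alpha> / 16 + p * s\<^sup>2 / \<beta> / 16"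
    by (rule final_comb[OF Main1 Zid IQ2 Y1 Y2 Yid Ysplit G1 G2 G3 G4 G5 G6 G7 G8 G9])
      (use c al be p_pos in auto)
  moreover have "1 / (16 * c) * (norm (x - x'))\<^sup>2 = a\<^sup>2 / c / 16" by (simp add: a_def)
  moreover have "1 / (16 * \<alpha>) * (norm (y - proj_simplex (y + \<alpha> *\<^sub>R F (xm y z))))\<^sup>2 = e\<^sup>2 / \<alpha> / 16"
    by (simp add: e_def yp_def yplus_def)
  moreover have "p / (16 * \<beta>) * (norm (z - z'))\<^sup>2 = p * s\<^sup>2 / \<beta> / 16" by (simp add: s_def)
  ultimately show ?thesis by linarith
qed

end

context sgda begin

lemma level_bound:
  assumes b: "\<forall>x. b \<le> psi F x" and bls: "bounded_level_sets F"
  shows "\<exists>Rl. \<forall>z. Pfun F p z \<le> Phi0 \<longrightarrow> norm z \<le> Rl"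
proof -
  define R1 where "R1 = max Phi0 1"
  have "bounded {x. psi F x \<le> R1}" using bls by (simp add: bounded_level_sets_def R1_def)
  then obtain M0 where M0: "\<And>x. psi F x \<le> R1 \<Longrightarrow> norm x \<le> M0" unfolding bounded_iff by blast
  define Rl where "Rl = M0 + sqrt (2 * max 0 (Phi0 - b) / p)"
  have "norm z \<le> Rl" if Pz: "Pfun F p z \<le> Phi0" for z
  proof -
    let ?x = "xs z"
    have Ph: "psi F ?x + p / 2 * (norm (?x - z))\<^sup>2 \<le> Phi0" using Pz by (simp add: Pfun_eq Phi_def)
    have ps: "b \<le> psi F ?x" using b by simp
    have sq0: "0 \<le> p / 2 * (norm (?x - z))\<^sup>2" using p_pos by simp
    have "psi F ?x \<le> R1" using Ph sq0 by (simp add: R1_def)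
    then have n1: "norm ?x \<le> M0" by (rule M0)
    have "p / 2 * (norm (?x - z))\<^sup>2 \<le> max 0 (Phi0 - b)" using Ph ps by linarith
    then have "(norm (?x - z))\<^sup>2 \<le> 2 * max 0 (Phi0 - b) / p" using p_pos by (simp add: field_simps)
    then have n2: "norm (?x - z) \<le> sqrt (2 * max 0 (Phi0 - b) / p)" by (simp add: real_le_rsqrt)
    have "norm z \<le> norm ?x + norm (?x - z)" by (metis norm_triangle_sub add.commute norm_minus_commute)
    then show ?thesis using n1 n2 by (simp add: Rl_def)
  qed
  then show ?thesis by blast
qed

end

theorem proposition3:
  fixes F :: "real^'n \<Rightarrow> real^'m"
    and gF :: "'m \<Rightarrow> real^'n \<Rightarrow> real^'n"
    and L p c \<alpha> R :: real
    and x0 z0 :: "real^'n" and y0 :: "real^'m"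
  assumes deriv: "\<And>i x. ((\<lambda>u. F u $ i) has_derivative (\<lambda>h. gF i x \<bullet> h)) (at x)"
    and L_pos: "L > 0"
    and lip_x: "\<And>x x' y y'. y \<in> prob_simplex \<Longrightarrow> y' \<in> prob_simplex \<Longrightarrow>
        norm (gradx_f gF x y - gradx_f gF x' y') \<le> L * norm ((x, y) - (x', y'))"
    and lip_y: "\<And>x x' (y::real^'m) y'. y \<in> prob_simplex \<Longrightarrow> y' \<in> prob_simplex \<Longrightarrow>
        norm (F x - F x') \<le> L * norm ((x, y) - (x', y'))"
    and psi_bdd: "\<exists>b. \<forall>x. b \<le> psi F x"
    and sc: "strict_complementarity F gF"
    and p: "p > 3 * L"
    and c: "0 < c" "c < 1 / (p + L)"
    and \<alpha>: "0 < \<alpha>" "\<alpha> < min (1 / (11 * L)) (c\<^sup>2 * (p - L)\<^sup>2 / (4 * L * (1 + c * (p - L))\<^sup>2))"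
    and y0: "y0 \<in> prob_simplex"
  shows "\<exists>\<beta>'>0. \<forall>\<beta> xs ys zs.
           0 < \<beta> \<and> \<beta> \<le> min (1 / 36) ((p - L)\<^sup>2 / (384 * p * (p + L)\<^sup>2)) \<and> \<beta> < \<beta>' \<and>
           xs 0 = x0 \<and> ys 0 = y0 \<and> zs 0 = z0 \<and>
           smoothed_gda F gF p c \<alpha> \<beta> xs ys zs \<and>
           (bounded_level_sets F \<or> (\<forall>t. norm (zs t) \<le> R))
         \<longrightarrow> (\<forall>t. phi F p (xs t) (ys t) (zs t) - phi F p (xs (Suc t)) (ys (Suc t)) (zs (Suc t))
                 \<ge> 1 / (16 * c) * (norm (xs t - xs (Suc t)))\<^sup>2
                   + 1 / (16 * \<alpha>) * (norm (ys t - proj_simplex (ys t + \<alpha> *\<^sub>R F (xopt F p (ys t) (zs t)))))\<^sup>2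
                   + p / (16 * \<beta>) * (norm (zs t - zs (Suc t)))\<^sup>2)"
proof -
  interpret sgda F gF L p
    using deriv L_pos lip_x lip_y psi_bdd p by unfold_locales auto
  obtain b where b: "\<forall>x. b \<le> psi F x" using psi_bdd by blast
  have mu: "mu = p - L" "0 < mu" using mu_pos by (auto simp: mu_def)
  define \<sigma> where "\<sigma> = 1 + 1 / (c * mu)"
  define M where "M = L / mu * (\<alpha> * L * \<sigma>)"
  have cmu: "0 < c * mu" using c mu by simp
  have sig: "0 < \<sigma>" using cmu by (simp add: \<sigma>_def add_pos_pos)
  have Mpos: "0 < M" using L_pos mu \<alpha> sig by (simp add: M_def)
  have c2: "c * (p + L) < 1" using c p_pos L_pos by (simp add: field_simps)
  have a1: "\<alpha> * (11 * L) < 1" using \<alpha> L_pos by (simp add: field_simps)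
  have a2: "\<alpha> * (4 * L * (1 + 1 / (c * mu))\<^sup>2) < 1"
  proof -
    have "\<alpha> < c\<^sup>2 * mu\<^sup>2 / (4 * L * (1 + c * mu)\<^sup>2)" using \<alpha> mu by simp
    moreover have "(1 + 1 / (c * mu))\<^sup>2 = (1 + c * mu)\<^sup>2 / (c\<^sup>2 * mu\<^sup>2)"
    proof -
      have "1 + 1 / (c * mu) = (1 + c * mu) / (c * mu)" using c(1) mu(2) by (simp add: field_simps)
      then show ?thesis by (simp add: power_divide power_mult_distrib)
    qed
    moreover have "0 < 4 * L * (1 + c * mu)\<^sup>2" using L_pos cmu by simp
    ultimately show ?thesis using c(1) mu(2) by (simp add: field_simps power2_eq_square)
  qed
  define Phi0 where "Phi0 = phi F p x0 y0 z0"
  obtain Rl where Rl: "bounded_level_sets F \<Longrightarrow> (\<forall>z. Pfun F p z \<le> Phi0 \<longrightarrow> norm z \<le> Rl)"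
    using level_bound[OF b] by blast
  define Rb where "Rb = max R Rl"
  obtain C where C: "C > 0" "\<forall>y z. y \<in> prob_simplex \<longrightarrow> norm z \<le> Rb \<longrightarrow>
     (norm (uu \<alpha> y z))\<^sup>2 \<le> 1 / 128 * (norm (z - xm y z))\<^sup>2 + C * (norm (y - yplus \<alpha> y z))\<^sup>2"
    using EB[OF sc \<alpha>(1), of "1 / 128" Rb] by auto
  define \<beta>' where "\<beta>' = min (min (mu / (8 * p)) (1 / (128 * c * p * M\<^sup>2))) (min (1 / (2 * c * p * \<sigma>\<^sup>2)) (1 / (128 * p * \<alpha> * C)))"
  have \<beta>'pos: "\<beta>' > 0" using mu p_pos c Mpos sig \<alpha> C by (simp add: \<beta>'_def)
  show ?thesis
  proof (intro exI[of _ \<beta>'] conjI \<beta>'pos allI impI)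
    fix \<beta> and xs :: "nat \<Rightarrow> real^'n" and ys :: "nat \<Rightarrow> real^'m" and zs :: "nat \<Rightarrow> real^'n"
    assume H: "0 < \<beta> \<and> \<beta> \<le> min (1 / 36) ((p - L)\<^sup>2 / (384 * p * (p + L)\<^sup>2)) \<and> \<beta> < \<beta>' \<and>
           xs 0 = x0 \<and> ys 0 = y0 \<and> zs 0 = z0 \<and>
           smoothed_gda F gF p c \<alpha> \<beta> xs ys zs \<and>
           (bounded_level_sets F \<or> (\<forall>t. norm (zs t) \<le> R))"
    have b0: "0 < \<beta>" and b36: "\<beta> \<le> 1 / 36" and bb': "\<beta> < \<beta>'" using H by auto
    have init: "xs 0 = x0" "ys 0 = y0" "zs 0 = z0" using H by auto
    have gda: "\<And>t. xs (Suc t) = xs t - c *\<^sub>R gK (xs t) (zs t) (ys t)"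
      "\<And>t. ys (Suc t) = proj_simplex (ys t + \<alpha> *\<^sub>R F (xs (Suc t)))"
      "\<And>t. zs (Suc t) = zs t + \<beta> *\<^sub>R (xs (Suc t) - zs t)"
      using H by (auto simp: smoothed_gda_def)
    have bc1: "\<beta> \<le> mu / (8 * p)" using bb' by (simp add: \<beta>'_def)
    have bc2: "\<beta> * (128 * c * p * (L / mu * (\<alpha> * L * (1 + 1 / (c * mu))))\<^sup>2) \<le> 1"
    proof -
      have "\<beta> \<le> 1 / (128 * c * p * M\<^sup>2)" using bb' by (simp add: \<beta>'_def)
      then have "\<beta> * (128 * c * p * M\<^sup>2) \<le> 1" using c p_pos Mpos by (simp add: field_simps)
      then show ?thesis by (simp add: M_def \<sigma>_def)
    qed
    have bc3: "\<beta> * (2 * c * p * (1 + 1 / (c * mu))\<^sup>2) \<le> 1"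
    proof -
      have "\<beta> \<le> 1 / (2 * c * p * \<sigma>\<^sup>2)" using bb' by (simp add: \<beta>'_def)
      then have "\<beta> * (2 * c * p * \<sigma>\<^sup>2) \<le> 1" using c p_pos sig by (simp add: field_simps)
      then show ?thesis by (simp add: \<sigma>_def)
    qed
    have bc4: "\<beta> * (128 * p * \<alpha> * C) \<le> 1"
    proof -
      have "\<beta> \<le> 1 / (128 * p * \<alpha> * C)" using bb' by (simp add: \<beta>'_def)
      then show ?thesis using C \<alpha> p_pos by (simp add: field_simps)
    qed
    have ysimp: "ys t \<in> prob_simplex" for t
      by (cases t) (auto simp: init y0 gda proj_in)
    have desc: "phi F p (xs t) (ys t) (zs t) - phi F p (xs (Suc t)) (ys (Suc t)) (zs (Suc t))
                 \<ge> 1 / (16 * c) * (norm (xs t - xs (Suc t)))\<^sup>2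
                   + 1 / (16 * \<alpha>) * (norm (ys t - proj_simplex (ys t + \<alpha> *\<^sub>R F (xopt F p (ys t) (zs t)))))\<^sup>2
                   + p / (16 * \<beta>) * (norm (zs t - zs (Suc t)))\<^sup>2" if zt: "norm (zs t) \<le> Rb" for t
      by (rule step[OF c(1) c2 \<alpha>(1) a1 a2 b0 b36 bc1 bc2 bc3 bc4 less_imp_le[OF C(1)] ysimp])
         (use C(2) ysimp zt gda in auto)
    have zb: "norm (zs t) \<le> Rb" for t
    proof (cases "\<forall>t. norm (zs t) \<le> R")
      case True then have "norm (zs t) \<le> R" by blast
      then show ?thesis by (simp add: Rb_def)
    next
      case False
      then have bls: "bounded_level_sets F" using H by blast
      have "phi F p (xs t) (ys t) (zs t) \<le> Phi0 \<and> norm (zs t) \<le> Rb" for t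
      proof (induction t)
        case 0
        have "Pfun F p z0 \<le> Phi0" unfolding Phi0_def by (rule phi_ge_P[OF y0])
        then have "norm z0 \<le> Rl" using Rl[OF bls] by blast
        then show ?case using init by (simp add: Phi0_def Rb_def)
      next
        case (Suc t)
        have d: "phi F p (xs (Suc t)) (ys (Suc t)) (zs (Suc t)) \<le> phi F p (xs t) (ys t) (zs t)"
        proof -
          have "0 \<le> 1 / (16 * c) * (norm (xs t - xs (Suc t)))\<^sup>2
                   + 1 / (16 * \<alpha>) * (norm (ys t - proj_simplex (ys t + \<alpha> *\<^sub>R F (xopt F p (ys t) (zs t)))))\<^sup>2
                   + p / (16 * \<beta>) * (norm (zs t - zs (Suc t)))\<^sup>2"
            using c \<alpha> b0 p_pos by (intro add_nonneg_nonneg mult_nonneg_nonneg) auto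
          then show ?thesis using desc[of t] Suc.IH by linarith
        qed
        then have ph: "phi F p (xs (Suc t)) (ys (Suc t)) (zs (Suc t)) \<le> Phi0" using Suc.IH by linarith
        have "Pfun F p (zs (Suc t)) \<le> Phi0" using phi_ge_P[OF ysimp[of "Suc t"], where x="xs (Suc t)" and z="zs (Suc t)"] ph by linarith
        then have "norm (zs (Suc t)) \<le> Rl" using Rl[OF bls] by blast
        then show ?case using ph by (simp add: Rb_def)
      qed
      then show ?thesis by blast
    qed
    fix t
    show "phi F p (xs t) (ys t) (zs t) - phi F p (xs (Suc t)) (ys (Suc t)) (zs (Suc t))
                 \<ge> 1 / (16 * c) * (norm (xs t - xs (Suc t)))\<^sup>2
                   + 1 / (16 * \<alpha>) * (norm (ys t - proj_simplex (ys t + \<alpha> *\<^sub>R F (xopt F p (ys t) (zs t)))))\<^sup>2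
                   + p / (16 * \<beta>) * (norm (zs t - zs (Suc t)))\<^sup>2"
      by (rule desc[OF zb[of t]])
  qed
qed

end
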